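(* For every $(x,a)\in H\times\mathcal{A}$, the robust Q-function satisfies \[ Q^{\delta,\mathscr{P}}_{\pi}(x,a)=\inf_{\lambda\ge0}\Big[\lambda\delta+\sum_{y\in\mathcal{X}}\max_{l\in\mathcal{X}}\Big(-\lambda|l-y|+c(x,a,l)+\sum_{a'\in\mathcal{A}}Q^{\delta,\mathscr{P}}_{\pi}(l,a')\pi(a'|l)\Big)P_{x,a}(y)\Big], \] where $c(x,a,l)=1$ if $l\in U$ and $c(x,a,l)=0$ otherwise.
   Context: Consider a Markov decision process with a finite state set $\mathcal{X}$, viewed as a subset of $\mathbb{R}$ (so $|y-z|$ is the distance between states), and a finite action set $\mathcal{A}$. The state set is partitioned into a goal set $E$, a forbidden (unsafe) set $U$, and $H:=\mathcal{X}\setminus(E\cup U)$; $E$ and $U$ are terminal (the process stops there). For each $(x,a)\in H\times\mathcal{A}$ a nominal transition probability $\mathcal{P}_{x,a}=\{P_{x,a}(y)\}_{y\in\mathcal{X}}$ on $\mathcal{X}$ is given, and $\mathscr{P}=\{\mathcal{P}_{x,a}\}_{(x,a)\in H\times\mathcal{A}}$; transition probabilities are time-invariant. The sample space is $\Omega=(\mathcal{X}\times\mathcal{A})^{\infty}$ with coordinate processes $X_t,A_t$. A stationary policy is $\pi:\mathcal{X}\to\mathscr{M}(\mathcal{A})$, written $\pi(a|x)$. For any collection $\tilde{\mathscr{P}}=\{\tilde{\mathcal{P}}_{x,a}\}_{(x,a)\in H\times\mathcal{A}}$ of transition probabilities, $\mathbb{E}^{\tilde{\mathscr{P}}}_{\pi}$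 denotes expectation for the process with $X_{t+1}\sim\tilde{\mathcal{P}}_{X_t,A_t}$ and $A_t\sim\pi(\cdot|X_t)$ (except when $A_0$ is conditioned on). For $S\subseteq\mathcal{X}$, $\tau_S$ is the first hitting time of $S$, and $\tau=\tau_{E\cup U}$. The 1-Wasserstein distance between probability measures $\mu,\nu$ on $\mathcal{X}$ is $W(\mu,\nu)=\min\{\sum_{(y,z)}\Gamma(y,z)|y-z| : \Gamma\in\mathscr{M}(\mathcal{X}\times\mathcal{X}),\ \sum_z\Gamma(y,z)=\mu(y),\ \sum_y\Gamma(y,z)=\nu(z)\}$. For $\delta\ge0$, $\mathcal{D}^{\delta}_{x,a}=\{\tilde{\mathcal{P}}_{x,a}\in\mathscr{M}(\mathcal{X}): W(\tilde{\mathcal{P}}_{x,a},\mathcal{P}_{x,a})\le\delta\}$ and $\mathscr{D}^{\delta}=\prod_{(x,a)\in H\times\mathcal{A}}\mathcal{D}^{\delta}_{x,a}$. The robust Q-function is $Q^{\delta,\mathscr{P}}_{\pi}(x,a)=\sup_{\tilde{\mathscr{P}}\in\mathscr{D}^{\delta}}\mathbb{E}^{\tilde{\mathscr{P}}}_{\pi}\big[\sum_{t=0}^{\tau-1}c_{t+1}\mid X_0=x,A_0=a\big]$, where $c_{t+1}=1$ if $X_{t+1}\in U$ and $0$ otherwise; by the same formula (empty sum, since $\tau=0$), $Q^{\delta,\mathscr{P}}_{\pi}(l,a')=0$ for terminal states $l\in E\cup U$. *)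

theory Defs
  imports Complex_Main
begin

definition is_dist :: "'s set \<Rightarrow> ('s \<Rightarrow> real) \<Rightarrow> bool" where
  "is_dist S p \<longleftrightarrow> (\<forall>y. 0 \<le> p y) \<and> (\<forall>y. y \<notin> S \<longrightarrow> p y = 0) \<and> sum p S = 1"

definition couplings :: "real set \<Rightarrow> (real \<Rightarrow> real) \<Rightarrow> (real \<Rightarrow> real) \<Rightarrow> (real \<Rightarrow> real \<Rightarrow> real) set" where
  "couplings X mu nu = {G. (\<forall>y z. 0 \<le> G y z) \<and> (\<forall>y z. (y, z) \<notin> X \<times> X \<longrightarrow> G y z = 0)
      \<and> (\<forall>y\<in>X. (\<Sum>z\<in>X. G y z) = mu y) \<and> (\<forall>z\<in>X. (\<Sum>y\<in>X. G y z) = nu z)}"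

definition wasserstein :: "real set \<Rightarrow> (real \<Rightarrow> real) \<Rightarrow> (real \<Rightarrow> real) \<Rightarrow> real" where
  "wasserstein X mu nu = Inf ((\<lambda>G. \<Sum>(y, z)\<in>X \<times> X. G y z * \<bar>y - z\<bar>) ` couplings X mu nu)"

definition amb_set :: "real set \<Rightarrow> real set \<Rightarrow> 'a set \<Rightarrow> (real \<Rightarrow> 'a \<Rightarrow> real \<Rightarrow> real)
    \<Rightarrow> real \<Rightarrow> (real \<Rightarrow> 'a \<Rightarrow> real \<Rightarrow> real) set" where
  "amb_set X H A P \<delta> = {Pt. \<forall>x\<in>H. \<forall>a\<in>A. is_dist X (Pt x a) \<and> wasserstein X (Pt x a) (P x a) \<le> \<delta>}"

definition cost :: "real set \<Rightarrow> real \<Rightarrow> real" where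
  "cost U l = (if l \<in> U then 1 else 0)"

text \<open>Finite-horizon expected cost: fin_cost ... Pt n x a
  = E^{Pt}_pi [ sum_{t < min(tau, n)} c_{t+1} | X_0 = x, A_0 = a ],
  computed by conditioning on the first transition (the process stops on E \<union> U).\<close>
primrec fin_cost :: "real set \<Rightarrow> real set \<Rightarrow> real set \<Rightarrow> 'a set \<Rightarrow> (real \<Rightarrow> 'a \<Rightarrow> real)
    \<Rightarrow> (real \<Rightarrow> 'a \<Rightarrow> real \<Rightarrow> real) \<Rightarrow> nat \<Rightarrow> real \<Rightarrow> 'a \<Rightarrow> real" where
  "fin_cost X E U A \<pi> Pt 0 x a = 0"
| "fin_cost X E U A \<pi> Pt (Suc n) x a =
     (if x \<in> X - (E \<union> U) then
        (\<Sum>y\<in>X. Pt x a y * (cost U y + (\<Sum>a'\<in>A. \<pi> y a' * fin_cost X E U A \<pi> Pt n y a')))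
      else 0)"

text \<open>Expected total cost E^{Pt}_pi[ sum_{t=0}^{tau-1} c_{t+1} | X_0=x, A_0=a ]
  as the (monotone) limit of the finite-horizon costs.\<close>
definition exp_cost :: "real set \<Rightarrow> real set \<Rightarrow> real set \<Rightarrow> 'a set \<Rightarrow> (real \<Rightarrow> 'a \<Rightarrow> real)
    \<Rightarrow> (real \<Rightarrow> 'a \<Rightarrow> real \<Rightarrow> real) \<Rightarrow> real \<Rightarrow> 'a \<Rightarrow> real" where
  "exp_cost X E U A \<pi> Pt x a = (SUP n. fin_cost X E U A \<pi> Pt n x a)"

definition robust_Q :: "real set \<Rightarrow> real set \<Rightarrow> real set \<Rightarrow> 'a set \<Rightarrow> (real \<Rightarrow> 'a \<Rightarrow> real)
    \<Rightarrow> (real \<Rightarrow> 'a \<Rightarrow> real \<Rightarrow> real) \<Rightarrow> real \<Rightarrow> real \<Rightarrow> 'a \<Rightarrow> real" where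
  "robust_Q X E U A \<pi> P \<delta> x a =
     (SUP Pt\<in>amb_set X (X - (E \<union> U)) A P \<delta>. exp_cost X E U A \<pi> Pt x a)"

end

theory Submission
  imports Defs "HOL-Library.FuncSet"
begin

lemma wass_le_coupling:
  assumes "G \<in> couplings X mu nu"
  shows "wasserstein X mu nu \<le> (\<Sum>(y, z)\<in>X \<times> X. G y z * \<bar>y - z\<bar>)"
  unfolding wasserstein_def
proof (rule cInf_lower)
  show "(\<Sum>(y, z)\<in>X \<times> X. G y z * \<bar>y - z\<bar>) \<in> (\<lambda>G. \<Sum>(y, z)\<in>X \<times> X. G y z * \<bar>y - z\<bar>) ` couplings X mu nu"
    using assms by blast
  show "bdd_below ((\<lambda>G. \<Sum>(y, z)\<in>X \<times> X. G y z * \<bar>y - z\<bar>) ` couplings X mu nu)"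
    by (rule bdd_belowI[of _ 0]) (auto simp: couplings_def intro!: sum_nonneg)
qed

definition pushf :: "real set \<Rightarrow> (real \<Rightarrow> real) \<Rightarrow> (real \<Rightarrow> real) \<Rightarrow> real \<Rightarrow> real" where
  "pushf X Pd T l = (\<Sum>y\<in>{y\<in>X. T y = l}. Pd y)"

definition tcost :: "real set \<Rightarrow> (real \<Rightarrow> real) \<Rightarrow> (real \<Rightarrow> real) \<Rightarrow> real" where
  "tcost X Pd T = (\<Sum>y\<in>X. Pd y * \<bar>T y - y\<bar>)"

definition mcoup :: "real set \<Rightarrow> (real \<Rightarrow> real) \<Rightarrow> (real \<Rightarrow> real) \<Rightarrow> real \<Rightarrow> real \<Rightarrow> real" where
  "mcoup X Pd T = (\<lambda>l y. if y \<in> X \<and> T y = l then Pd y else 0)"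

lemma mcoup_in:
  assumes "finite X" "is_dist X Pd" "T \<in> X \<rightarrow>\<^sub>E X"
  shows "mcoup X Pd T \<in> couplings X (pushf X Pd T) Pd"
proof -
  have nn: "\<And>y. 0 \<le> Pd y" using assms(2) by (auto simp: is_dist_def)
  have TX: "\<And>y. y \<in> X \<Longrightarrow> T y \<in> X" using assms(3) by auto
  have rows: "\<forall>l\<in>X. (\<Sum>y\<in>X. mcoup X Pd T l y) = pushf X Pd T l"
  proof
    fix l
    have "(\<Sum>y\<in>X. mcoup X Pd T l y) = (\<Sum>y\<in>X. if T y = l then Pd y else 0)"
      by (rule sum.cong) (auto simp: mcoup_def)
    also have "\<dots> = pushf X Pd T l"
      unfolding pushf_def by (simp add: sum.inter_filter[OF assms(1)])
    finally show "(\<Sum>y\<in>X. mcoup X Pd T l y) = pushf X Pd T l" .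
  qed
  have cols: "\<forall>y\<in>X. (\<Sum>l\<in>X. mcoup X Pd T l y) = Pd y"
  proof
    fix y assume y: "y \<in> X"
    have "(\<Sum>l\<in>X. mcoup X Pd T l y) = (\<Sum>l\<in>X. if T y = l then Pd y else 0)"
      using y by (auto simp: mcoup_def intro!: sum.cong)
    also have "\<dots> = Pd y" using assms(1) TX[OF y] by (simp add: sum.delta)
    finally show "(\<Sum>l\<in>X. mcoup X Pd T l y) = Pd y" .
  qed
  have z: "\<forall>y z. (y, z) \<notin> X \<times> X \<longrightarrow> mcoup X Pd T y z = 0"
    unfolding mcoup_def using TX by auto
  have n: "\<forall>y z. 0 \<le> mcoup X Pd T y z"
    unfolding mcoup_def using nn by auto
  show ?thesis unfolding couplings_def using rows cols z n by blast
qed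

lemma mcoup_cost:
  assumes "finite X" "T \<in> X \<rightarrow>\<^sub>E X"
  shows "(\<Sum>(l, y)\<in>X \<times> X. mcoup X Pd T l y * \<bar>l - y\<bar>) = tcost X Pd T"
proof -
  have TX: "\<And>y. y \<in> X \<Longrightarrow> T y \<in> X" using assms(2) by auto
  have "(\<Sum>(l, y)\<in>X \<times> X. mcoup X Pd T l y * \<bar>l - y\<bar>) = (\<Sum>l\<in>X. \<Sum>y\<in>X. mcoup X Pd T l y * \<bar>l - y\<bar>)"
    by (simp add: sum.cartesian_product)
  also have "\<dots> = (\<Sum>y\<in>X. \<Sum>l\<in>X. mcoup X Pd T l y * \<bar>l - y\<bar>)"
    by (rule sum.swap)
  also have "\<dots> = (\<Sum>y\<in>X. Pd y * \<bar>T y - y\<bar>)"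
  proof (rule sum.cong[OF refl])
    fix y assume y: "y \<in> X"
    have "(\<Sum>l\<in>X. mcoup X Pd T l y * \<bar>l - y\<bar>) = (\<Sum>l\<in>X. if T y = l then Pd y * \<bar>T y - y\<bar> else 0)"
      using y by (auto simp: mcoup_def intro!: sum.cong)
    also have "\<dots> = Pd y * \<bar>T y - y\<bar>" using assms(1) TX[OF y] by (simp add: sum.delta)
    finally show "(\<Sum>l\<in>X. mcoup X Pd T l y * \<bar>l - y\<bar>) = Pd y * \<bar>T y - y\<bar>" .
  qed
  finally show ?thesis by (simp add: tcost_def)
qed

lemma pushf_dist:
  assumes "finite X" "is_dist X Pd" "T \<in> X \<rightarrow>\<^sub>E X"
  shows "is_dist X (pushf X Pd T)"
proof -
  have nn: "\<And>y. 0 \<le> Pd y" using assms(2) by (auto simp: is_dist_def)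
  have TX: "\<And>y. y \<in> X \<Longrightarrow> T y \<in> X" using assms(3) by auto
  have "(\<Sum>l\<in>X. pushf X Pd T l) = (\<Sum>y\<in>X. Pd y)"
    unfolding pushf_def by (rule sum.group) (use assms(1) TX in auto)
  also have "\<dots> = 1" using assms(2) by (simp add: is_dist_def)
  finally have s: "(\<Sum>l\<in>X. pushf X Pd T l) = 1" .
  have z: "\<And>l. l \<notin> X \<Longrightarrow> pushf X Pd T l = 0"
  proof -
    fix l assume "l \<notin> X"
    then have e: "{y\<in>X. T y = l} = {}" using TX by auto
    show "pushf X Pd T l = 0" unfolding pushf_def e by simp
  qed
  show ?thesis unfolding is_dist_def using s z nn by (auto simp: pushf_def intro!: sum_nonneg)
qed

lemma pushf_sum:
  assumes "finite X" "T \<in> X \<rightarrow>\<^sub>E X"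
  shows "(\<Sum>l\<in>X. pushf X Pd T l * f l) = (\<Sum>y\<in>X. Pd y * f (T y))"
proof -
  have TX: "\<And>y. y \<in> X \<Longrightarrow> T y \<in> X" using assms(2) by auto
  have "(\<Sum>l\<in>X. pushf X Pd T l * f l) = (\<Sum>l\<in>X. \<Sum>y\<in>{y\<in>X. T y = l}. Pd y * f (T y))"
    unfolding pushf_def by (auto simp: sum_distrib_right intro!: sum.cong)
  also have "\<dots> = (\<Sum>y\<in>X. Pd y * f (T y))"
    by (rule sum.group) (use assms(1) TX in auto)
  finally show ?thesis .
qed


definition Mx :: "real set \<Rightarrow> (real \<Rightarrow> real) \<Rightarrow> real \<Rightarrow> real \<Rightarrow> real" where
  "Mx X f lam y = (MAX l\<in>X. - lam * \<bar>l - y\<bar> + f l)"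

definition phi :: "real set \<Rightarrow> real \<Rightarrow> (real \<Rightarrow> real) \<Rightarrow> (real \<Rightarrow> real) \<Rightarrow> real \<Rightarrow> real" where
  "phi X \<delta> Pd f lam = lam * \<delta> + (\<Sum>y\<in>X. Mx X f lam y * Pd y)"

lemma Mx_ge: "finite X \<Longrightarrow> l \<in> X \<Longrightarrow> - lam * \<bar>l - y\<bar> + f l \<le> Mx X f lam y"
  unfolding Mx_def by (rule Max_ge) auto

lemma Mx_le: "finite X \<Longrightarrow> X \<noteq> {} \<Longrightarrow> (\<And>l. l \<in> X \<Longrightarrow> - lam * \<bar>l - y\<bar> + f l \<le> c) \<Longrightarrow> Mx X f lam y \<le> c"
  unfolding Mx_def by (rule Max.boundedI) auto

lemma Mx_in: "finite X \<Longrightarrow> X \<noteq> {} \<Longrightarrow> \<exists>l\<in>X. Mx X f lam y = - lam * \<bar>l - y\<bar> + f l"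
proof -
  assume fin: "finite X" and ne: "X \<noteq> {}"
  have "Mx X f lam y \<in> (\<lambda>l. - lam * \<bar>l - y\<bar> + f l) ` X" unfolding Mx_def using fin ne by (intro Max_in) auto
  then obtain l where "l \<in> X" "Mx X f lam y = - lam * \<bar>l - y\<bar> + f l" by (rule imageE)
  then show ?thesis by blast
qed

lemma weak_dual:
  assumes fin: "finite X" and q: "is_dist X q" and Pd: "is_dist X Pd"
    and W: "wasserstein X q Pd \<le> \<delta>" and lam: "lam \<ge> 0"
  shows "(\<Sum>l\<in>X. q l * f l) \<le> phi X \<delta> Pd f lam"
proof -
  have Xne: "X \<noteq> {}" using q by (auto simp: is_dist_def)
  define S where "S = (\<Sum>y\<in>X. Mx X f lam y * Pd y)"
  have key: "(\<Sum>l\<in>X. q l * f l) \<le> S + lam * (\<Sum>(l, y)\<in>X \<times> X. G l y * \<bar>l - y\<bar>)"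
    if G: "G \<in> couplings X q Pd" for G
  proof -
    from G have Gnn: "\<And>l y. 0 \<le> G l y" and rows: "\<And>l. l \<in> X \<Longrightarrow> (\<Sum>y\<in>X. G l y) = q l"
      and cols: "\<And>y. y \<in> X \<Longrightarrow> (\<Sum>l\<in>X. G l y) = Pd y"
      by (auto simp: couplings_def)
    have "(\<Sum>l\<in>X. q l * f l) = (\<Sum>l\<in>X. \<Sum>y\<in>X. G l y * f l)"
      by (rule sum.cong) (auto simp: rows[symmetric] sum_distrib_right)
    also have "\<dots> \<le> (\<Sum>l\<in>X. \<Sum>y\<in>X. G l y * Mx X f lam y + lam * (G l y * \<bar>l - y\<bar>))"
    proof (rule sum_mono, rule sum_mono)
      fix l y assume l: "l \<in> X" and y: "y \<in> X"
      have "f l \<le> Mx X f lam y + lam * \<bar>l - y\<bar>" using Mx_ge[OF fin l, of lam y f] by linarith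
      then have "G l y * f l \<le> G l y * (Mx X f lam y + lam * \<bar>l - y\<bar>)"
        by (intro mult_left_mono) (auto simp: Gnn)
      then show "G l y * f l \<le> G l y * Mx X f lam y + lam * (G l y * \<bar>l - y\<bar>)"
        by (simp add: algebra_simps)
    qed
    also have "\<dots> = (\<Sum>l\<in>X. \<Sum>y\<in>X. G l y * Mx X f lam y) + lam * (\<Sum>l\<in>X. \<Sum>y\<in>X. G l y * \<bar>l - y\<bar>)"
      by (simp add: sum.distrib sum_distrib_left)
    also have "(\<Sum>l\<in>X. \<Sum>y\<in>X. G l y * Mx X f lam y) = (\<Sum>y\<in>X. \<Sum>l\<in>X. G l y * Mx X f lam y)"
      by (rule sum.swap)
    also have "\<dots> = S" unfolding S_def
      by (rule sum.cong) (auto simp: cols[symmetric] sum_distrib_left mult.commute)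
    also have "(\<Sum>l\<in>X. \<Sum>y\<in>X. G l y * \<bar>l - y\<bar>) = (\<Sum>(l, y)\<in>X \<times> X. G l y * \<bar>l - y\<bar>)"
      by (simp add: sum.cartesian_product)
    finally show ?thesis .
  qed
  define G0 where "G0 = (\<lambda>l y. q l * Pd y)"
  have qs: "sum q X = 1" "\<And>y. 0 \<le> q y" "\<And>y. y \<notin> X \<Longrightarrow> q y = 0" using q by (auto simp: is_dist_def)
  have Ps: "sum Pd X = 1" "\<And>y. 0 \<le> Pd y" "\<And>y. y \<notin> X \<Longrightarrow> Pd y = 0" using Pd by (auto simp: is_dist_def)
  have G0c: "G0 \<in> couplings X q Pd"
    unfolding couplings_def G0_def using qs Ps
    by (auto simp: sum_distrib_left[symmetric] sum_distrib_right[symmetric])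
  show ?thesis
  proof (cases "lam = 0")
    case True
    then show ?thesis using key[OF G0c] by (simp add: phi_def S_def)
  next
    case False
    then have lp: "lam > 0" using lam by simp
    have "((\<Sum>l\<in>X. q l * f l) - S) / lam \<le> wasserstein X q Pd"
      unfolding wasserstein_def
    proof (rule cInf_greatest)
      show "(\<lambda>G. \<Sum>(y, z)\<in>X \<times> X. G y z * \<bar>y - z\<bar>) ` couplings X q Pd \<noteq> {}" using G0c by blast
    next
      fix c assume "c \<in> (\<lambda>G. \<Sum>(y, z)\<in>X \<times> X. G y z * \<bar>y - z\<bar>) ` couplings X q Pd"
      then obtain G where G: "G \<in> couplings X q Pd" and c: "c = (\<Sum>(y, z)\<in>X \<times> X. G y z * \<bar>y - z\<bar>)" by blast
      show "((\<Sum>l\<in>X. q l * f l) - S) / lam \<le> c"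
        using key[OF G] lp unfolding c by (simp add: pos_divide_le_eq mult.commute)
    qed
    then have "((\<Sum>l\<in>X. q l * f l) - S) / lam \<le> \<delta>" using W by linarith
    then show ?thesis using lp unfolding phi_def S_def[symmetric] by (simp add: pos_divide_le_eq mult.commute)
  qed
qed



definition thetaf :: "real set \<Rightarrow> (real \<Rightarrow> real) \<Rightarrow> real \<Rightarrow> (real \<Rightarrow> real) \<Rightarrow> (real \<Rightarrow> real) \<Rightarrow> real" where
  "thetaf X Pd \<delta> T1 T2 = (tcost X Pd T2 - \<delta>) / (tcost X Pd T2 - tcost X Pd T1)"

definition mixp :: "real set \<Rightarrow> (real \<Rightarrow> real) \<Rightarrow> real \<Rightarrow> (real \<Rightarrow> real) \<Rightarrow> (real \<Rightarrow> real) \<Rightarrow> real \<Rightarrow> real" where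
  "mixp X Pd \<delta> T1 T2 l = thetaf X Pd \<delta> T1 T2 * pushf X Pd T1 l + (1 - thetaf X Pd \<delta> T1 T2) * pushf X Pd T2 l"

definition Fset :: "real set \<Rightarrow> (real \<Rightarrow> real) \<Rightarrow> real \<Rightarrow> (real \<Rightarrow> real) set" where
  "Fset X Pd \<delta> = pushf X Pd ` {T \<in> X \<rightarrow>\<^sub>E X. tcost X Pd T \<le> \<delta>}
     \<union> (\<lambda>(T1, T2). mixp X Pd \<delta> T1 T2) ` {(T1, T2). T1 \<in> X \<rightarrow>\<^sub>E X \<and> T2 \<in> X \<rightarrow>\<^sub>E X \<and> tcost X Pd T1 < \<delta> \<and> \<delta> < tcost X Pd T2}"

lemma Fset_finite: "finite X \<Longrightarrow> finite (Fset X Pd \<delta>)"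
proof -
  assume fin: "finite X"
  have f1: "finite (X \<rightarrow>\<^sub>E X)" using finite_PiE[OF fin, of "\<lambda>_. X"] fin by blast
  have "{(T1, T2). T1 \<in> X \<rightarrow>\<^sub>E X \<and> T2 \<in> X \<rightarrow>\<^sub>E X \<and> tcost X Pd T1 < \<delta> \<and> \<delta> < tcost X Pd T2}
        \<subseteq> (X \<rightarrow>\<^sub>E X) \<times> (X \<rightarrow>\<^sub>E X)" by auto
  then have "finite {(T1, T2). T1 \<in> X \<rightarrow>\<^sub>E X \<and> T2 \<in> X \<rightarrow>\<^sub>E X \<and> tcost X Pd T1 < \<delta> \<and> \<delta> < tcost X Pd T2}"
    by (rule finite_subset[OF _ finite_cartesian_product[OF f1 f1]])
  then show ?thesis unfolding Fset_def using f1 by auto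
qed

lemma tcost_id: "tcost X Pd (restrict (\<lambda>y. y) X) = 0"
  unfolding tcost_def by (auto intro!: sum.neutral)

lemma id_PiE: "restrict (\<lambda>y. y) X \<in> X \<rightarrow>\<^sub>E X" by auto

lemma pushf_id: "finite X \<Longrightarrow> is_dist X Pd \<Longrightarrow> pushf X Pd (restrict (\<lambda>y. y) X) = Pd"
proof
  fix l assume fin: "finite X" and Pd: "is_dist X Pd"
  show "pushf X Pd (restrict (\<lambda>y. y) X) l = Pd l"
  proof (cases "l \<in> X")
    case True
    then have "{y \<in> X. restrict (\<lambda>y. y) X y = l} = {l}" by auto
    then show ?thesis unfolding pushf_def by simp
  next
    case False
    then have "{y \<in> X. restrict (\<lambda>y. y) X y = l} = {}" by auto
    then show ?thesis unfolding pushf_def using False Pd by (simp add: is_dist_def)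
  qed
qed

lemma Fset_ne: "\<delta> \<ge> 0 \<Longrightarrow> pushf X Pd (restrict (\<lambda>y. y) X) \<in> Fset X Pd \<delta>"
proof -
  assume d: "\<delta> \<ge> 0"
  have "tcost X Pd (restrict (\<lambda>y. y) X) \<le> \<delta>" using tcost_id[of X Pd] d by linarith
  with id_PiE[of X] have "restrict (\<lambda>y. y) X \<in> {T \<in> X \<rightarrow>\<^sub>E X. tcost X Pd T \<le> \<delta>}" by blast
  then show ?thesis unfolding Fset_def by blast
qed

lemma coupling_mix:
  assumes "G1 \<in> couplings X mu1 nu" "G2 \<in> couplings X mu2 nu" "0 \<le> t" "t \<le> 1"
  shows "(\<lambda>l y. t * G1 l y + (1 - t) * G2 l y) \<in> couplings X (\<lambda>l. t * mu1 l + (1 - t) * mu2 l) nu"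
proof -
  have a: "\<forall>y z. 0 \<le> t * G1 y z + (1 - t) * G2 y z" using assms by (auto simp: couplings_def)
  have b: "\<forall>y z. (y, z) \<notin> X \<times> X \<longrightarrow> t * G1 y z + (1 - t) * G2 y z = 0" using assms by (auto simp: couplings_def)
  have c: "\<forall>y\<in>X. (\<Sum>z\<in>X. t * G1 y z + (1 - t) * G2 y z) = t * mu1 y + (1 - t) * mu2 y"
    using assms by (auto simp: couplings_def sum.distrib sum_distrib_left[symmetric])
  have d: "\<forall>z\<in>X. (\<Sum>y\<in>X. t * G1 y z + (1 - t) * G2 y z) = nu z"
  proof
    fix z assume z: "z \<in> X"
    have "(\<Sum>y\<in>X. t * G1 y z + (1 - t) * G2 y z) = t * (\<Sum>y\<in>X. G1 y z) + (1 - t) * (\<Sum>y\<in>X. G2 y z)"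
      by (simp add: sum.distrib sum_distrib_left)
    also have "\<dots> = t * nu z + (1 - t) * nu z" using assms z by (simp add: couplings_def)
    finally show "(\<Sum>y\<in>X. t * G1 y z + (1 - t) * G2 y z) = nu z" by (simp add: algebra_simps)
  qed
  show ?thesis unfolding couplings_def using a b c d by blast
qed

lemma Fset_sub:
  assumes fin: "finite X" and Pd: "is_dist X Pd" and p: "p \<in> Fset X Pd \<delta>"
  shows "is_dist X p \<and> wasserstein X p Pd \<le> \<delta>"
  using p unfolding Fset_def
proof (elim UnE imageE)
  fix T assume p: "p = pushf X Pd T" and T: "T \<in> {T \<in> X \<rightarrow>\<^sub>E X. tcost X Pd T \<le> \<delta>}"
  have "wasserstein X p Pd \<le> tcost X Pd T"
    using wass_le_coupling[OF mcoup_in[OF fin Pd, of T]] mcoup_cost[OF fin, of T Pd] T p by auto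
  then show ?thesis using pushf_dist[OF fin Pd, of T] T p by auto
next
  fix TT assume p: "p = (\<lambda>(T1, T2). mixp X Pd \<delta> T1 T2) TT"
    and TT: "TT \<in> {(T1, T2). T1 \<in> X \<rightarrow>\<^sub>E X \<and> T2 \<in> X \<rightarrow>\<^sub>E X \<and> tcost X Pd T1 < \<delta> \<and> \<delta> < tcost X Pd T2}"
  obtain T1 T2 where TT': "TT = (T1, T2)" by (cases TT)
  have T1: "T1 \<in> X \<rightarrow>\<^sub>E X" and T2: "T2 \<in> X \<rightarrow>\<^sub>E X" and c1: "tcost X Pd T1 < \<delta>" and c2: "\<delta> < tcost X Pd T2"
    using TT TT' by auto
  define t where "t = thetaf X Pd \<delta> T1 T2"
  have t0: "0 \<le> t" and t1: "t \<le> 1" using c1 c2 unfolding t_def thetaf_def by (auto simp: field_simps)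
  have tm: "t * (tcost X Pd T2 - tcost X Pd T1) = tcost X Pd T2 - \<delta>"
    using c1 c2 unfolding t_def thetaf_def by simp
  have tc: "t * tcost X Pd T1 + (1 - t) * tcost X Pd T2 = \<delta>"
  proof -
    have "t * tcost X Pd T1 + (1 - t) * tcost X Pd T2 = tcost X Pd T2 - t * (tcost X Pd T2 - tcost X Pd T1)"
      by (simp add: algebra_simps)
    then show ?thesis using tm by simp
  qed
  have pe: "p = (\<lambda>l. t * pushf X Pd T1 l + (1 - t) * pushf X Pd T2 l)"
    using p TT' by (auto simp: mixp_def t_def)
  have d1: "is_dist X (pushf X Pd T1)" and d2: "is_dist X (pushf X Pd T2)"
    using pushf_dist[OF fin Pd] T1 T2 by auto
  have dist: "is_dist X p" unfolding pe is_dist_def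
    using d1 d2 t0 t1 by (auto simp: is_dist_def sum.distrib sum_distrib_left[symmetric])
  define G where "G = (\<lambda>l y. t * mcoup X Pd T1 l y + (1 - t) * mcoup X Pd T2 l y)"
  have Gc: "G \<in> couplings X p Pd" unfolding G_def pe
    by (rule coupling_mix[OF mcoup_in[OF fin Pd T1] mcoup_in[OF fin Pd T2] t0 t1])
  have "(\<Sum>(l, y)\<in>X \<times> X. G l y * \<bar>l - y\<bar>)
      = t * (\<Sum>(l, y)\<in>X \<times> X. mcoup X Pd T1 l y * \<bar>l - y\<bar>) + (1 - t) * (\<Sum>(l, y)\<in>X \<times> X. mcoup X Pd T2 l y * \<bar>l - y\<bar>)"
  proof -
    have "(\<Sum>(l, y)\<in>X \<times> X. G l y * \<bar>l - y\<bar>) = (\<Sum>z\<in>X \<times> X. t * (case z of (l, y) \<Rightarrow> mcoup X Pd T1 l y * \<bar>l - y\<bar>)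
        + (1 - t) * (case z of (l, y) \<Rightarrow> mcoup X Pd T2 l y * \<bar>l - y\<bar>))"
      by (rule sum.cong) (auto simp: G_def algebra_simps)
    also have "\<dots> = t * (\<Sum>(l, y)\<in>X \<times> X. mcoup X Pd T1 l y * \<bar>l - y\<bar>) + (1 - t) * (\<Sum>(l, y)\<in>X \<times> X. mcoup X Pd T2 l y * \<bar>l - y\<bar>)"
      by (simp only: sum.distrib sum_distrib_left)
    finally show ?thesis .
  qed
  also have "\<dots> = \<delta>" using mcoup_cost[OF fin T1] mcoup_cost[OF fin T2] tc by simp
  finally have "wasserstein X p Pd \<le> \<delta>" using wass_le_coupling[OF Gc] by simp
  then show ?thesis using dist by simp
qed



lemma continuous_on_Max_fin:
  fixes h :: "real \<Rightarrow> 'b \<Rightarrow> real"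
  assumes "finite S" "S \<noteq> {}" "\<And>l. l \<in> S \<Longrightarrow> continuous_on D (\<lambda>x. h x l)"
  shows "continuous_on D (\<lambda>x. MAX l\<in>S. h x l)"
  using assms
proof (induction S rule: finite_ne_induct)
  case (singleton a) then show ?case by simp
next
  case (insert a F)
  have "(\<lambda>x. MAX l\<in>insert a F. h x l) = (\<lambda>x. max (h x a) (MAX l\<in>F. h x l))"
    using insert.hyps by (auto simp: Max_insert)
  then show ?case using insert by (auto intro!: continuous_on_max)
qed

lemma fin_argmin:
  fixes h :: "'b \<Rightarrow> real"
  assumes "finite S" "S \<noteq> {}"
  shows "\<exists>x\<in>S. \<forall>y\<in>S. h x \<le> h y"
proof -
  have "Min (h ` S) \<in> h ` S" using assms by (intro Min_in) auto
  then obtain x where x: "x \<in> S" "h x = Min (h ` S)" by (metis imageE)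
  have "\<forall>y\<in>S. h x \<le> h y" using x assms(1) by auto
  then show ?thesis using x by blast
qed

lemma fin_argmax:
  fixes h :: "'b \<Rightarrow> real"
  assumes "finite S" "S \<noteq> {}"
  shows "\<exists>x\<in>S. \<forall>y\<in>S. h y \<le> h x"
proof -
  have "Max (h ` S) \<in> h ` S" using assms by (intro Max_in) auto
  then obtain x where x: "x \<in> S" "h x = Max (h ` S)" by (metis imageE)
  have "\<forall>y\<in>S. h y \<le> h x" using x assms(1) by auto
  then show ?thesis using x by blast
qed

lemma phi_cont: "finite X \<Longrightarrow> X \<noteq> {} \<Longrightarrow> continuous_on D (phi X \<delta> Pd f)"
  unfolding phi_def Mx_def
  by (intro continuous_intros continuous_on_Max_fin) auto


lemma sum_push_opt:
  assumes fin: "finite X" and T: "T \<in> X \<rightarrow>\<^sub>E X"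
    and opt: "\<And>y. y \<in> X \<Longrightarrow> - ls * \<bar>T y - y\<bar> + f (T y) = Mx X f ls y"
  shows "(\<Sum>l\<in>X. pushf X Pd T l * f l) = (\<Sum>y\<in>X. Mx X f ls y * Pd y) + ls * tcost X Pd T"
proof -
  have "(\<Sum>l\<in>X. pushf X Pd T l * f l) = (\<Sum>y\<in>X. Pd y * f (T y))" by (rule pushf_sum[OF fin T])
  also have "\<dots> = (\<Sum>y\<in>X. Mx X f ls y * Pd y + ls * (Pd y * \<bar>T y - y\<bar>))"
  proof (rule sum.cong[OF refl])
    fix y assume "y \<in> X"
    then have "f (T y) = Mx X f ls y + ls * \<bar>T y - y\<bar>" using opt by force
    then show "Pd y * f (T y) = Mx X f ls y * Pd y + ls * (Pd y * \<bar>T y - y\<bar>)" by (simp add: algebra_simps)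
  qed
  also have "\<dots> = (\<Sum>y\<in>X. Mx X f ls y * Pd y) + ls * tcost X Pd T"
    by (simp add: sum.distrib sum_distrib_left tcost_def)
  finally show ?thesis .
qed

lemma strong_dual:
  assumes fin: "finite X" and ne: "X \<noteq> {}" and Pd: "is_dist X Pd" and d0: "\<delta> \<ge> 0"
  shows "\<exists>lam\<ge>0. \<exists>p\<in>Fset X Pd \<delta>. phi X \<delta> Pd f lam \<le> (\<Sum>l\<in>X. p l * f l)"
proof -
  have Pnn: "\<And>y. 0 \<le> Pd y" using Pd by (auto simp: is_dist_def)
  define lt where "lt = Max (insert 0 ((\<lambda>(l, y). (f l - f y) / \<bar>l - y\<bar>) ` {(l, y). l \<in> X \<and> y \<in> X \<and> l \<noteq> y}))"
  have finQ: "finite {(l, y). l \<in> X \<and> y \<in> X \<and> l \<noteq> y}"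
    by (rule finite_subset[of _ "X \<times> X"]) (use fin in auto)
  have lt0: "0 \<le> lt" unfolding lt_def using finQ by (intro Max_ge) auto
  have ltb: "f l - lam * \<bar>l - y\<bar> \<le> f y" if l: "l \<in> X" and y: "y \<in> X" and lam: "lam \<ge> lt" for l y lam
  proof (cases "l = y")
    case True then show ?thesis by simp
  next
    case False
    then have pos: "\<bar>l - y\<bar> > 0" by simp
    have "(f l - f y) / \<bar>l - y\<bar> \<le> lt" unfolding lt_def using finQ l y False
      by (intro Max_ge) auto
    then have "(f l - f y) / \<bar>l - y\<bar> \<le> lam" using lam by linarith
    then have "f l - f y \<le> lam * \<bar>l - y\<bar>" using pos by (simp add: divide_le_eq)
    then show ?thesis by linarith
  qed
  have Mx_big: "Mx X f lam y = f y" if lam: "lam \<ge> lt" and y: "y \<in> X" for lam y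
  proof (rule antisym)
    show "Mx X f lam y \<le> f y" using ltb[OF _ y lam] by (intro Mx_le[OF fin ne]) auto
    show "f y \<le> Mx X f lam y" using Mx_ge[OF fin y, of lam y f] by simp
  qed
  have phi_big: "phi X \<delta> Pd f lam = lam * \<delta> + (\<Sum>y\<in>X. f y * Pd y)" if "lam \<ge> lt" for lam
    unfolding phi_def using Mx_big[OF that] by simp
  define L0 where "L0 = lt + 1"
  obtain ls where ls: "ls \<in> {0..L0}" and lsmin: "\<And>x. x \<in> {0..L0} \<Longrightarrow> phi X \<delta> Pd f ls \<le> phi X \<delta> Pd f x"
    using continuous_attains_inf[OF compact_Icc, of 0 L0 "phi X \<delta> Pd f"] phi_cont[OF fin ne] lt0
    unfolding L0_def by auto
  have ls0: "0 \<le> ls" and lsL: "ls \<le> L0" using ls by auto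
  define g where "g y l = - ls * \<bar>l - y\<bar> + f l" for y l
  define Gs where "Gs = (\<lambda>(y, l). Mx X f ls y - g y l) ` {(y, l). y \<in> X \<and> l \<in> X \<and> g y l < Mx X f ls y}"
  have finGs: "finite Gs" unfolding Gs_def
    by (rule finite_imageI, rule finite_subset[of _ "X \<times> X"]) (use fin in auto)
  define \<gamma> where "\<gamma> = Min (insert 1 Gs)"
  have gpos: "\<gamma> > 0" unfolding \<gamma>_def using finGs by (auto simp: Gs_def)
  have gap: "g y l \<le> Mx X f ls y - \<gamma>" if "y \<in> X" "l \<in> X" "g y l < Mx X f ls y" for y l
  proof -
    have "Mx X f ls y - g y l \<in> Gs" unfolding Gs_def using that by force
    then have "\<gamma> \<le> Mx X f ls y - g y l" unfolding \<gamma>_def using finGs by simp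
    then show ?thesis by simp
  qed
  have gle: "g y l \<le> Mx X f ls y" if "l \<in> X" for y l unfolding g_def using Mx_ge[OF fin that] .
  define Am where "Am y = {l \<in> X. g y l = Mx X f ls y}" for y
  have Am_ne: "Am y \<noteq> {}" "finite (Am y)" for y
    unfolding Am_def g_def using Mx_in[OF fin ne, of f ls y] fin by auto
  define T1 where "T1 = (\<lambda>y\<in>X. SOME l. l \<in> Am y \<and> (\<forall>l'\<in>Am y. \<bar>l - y\<bar> \<le> \<bar>l' - y\<bar>))"
  define T2 where "T2 = (\<lambda>y\<in>X. SOME l. l \<in> Am y \<and> (\<forall>l'\<in>Am y. \<bar>l' - y\<bar> \<le> \<bar>l - y\<bar>))"
  have T1p: "T1 y \<in> Am y \<and> (\<forall>l'\<in>Am y. \<bar>T1 y - y\<bar> \<le> \<bar>l' - y\<bar>)" if "y \<in> X" for y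
  proof -
    have "\<exists>l. l \<in> Am y \<and> (\<forall>l'\<in>Am y. \<bar>l - y\<bar> \<le> \<bar>l' - y\<bar>)"
      using fin_argmin[OF Am_ne(2) Am_ne(1), where h="\<lambda>l. \<bar>l - y\<bar>"] by blast
    note ex = this
    have e: "T1 y = (SOME l. l \<in> Am y \<and> (\<forall>l'\<in>Am y. \<bar>l - y\<bar> \<le> \<bar>l' - y\<bar>))" unfolding T1_def using that by simp
    show ?thesis unfolding e by (rule someI_ex[OF ex])
  qed
  have T2p: "T2 y \<in> Am y \<and> (\<forall>l'\<in>Am y. \<bar>l' - y\<bar> \<le> \<bar>T2 y - y\<bar>)" if "y \<in> X" for y
  proof -
    have "\<exists>l. l \<in> Am y \<and> (\<forall>l'\<in>Am y. \<bar>l' - y\<bar> \<le> \<bar>l - y\<bar>)"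
      using fin_argmax[OF Am_ne(2) Am_ne(1), where h="\<lambda>l. \<bar>l - y\<bar>"] by blast
    note ex = this
    have e: "T2 y = (SOME l. l \<in> Am y \<and> (\<forall>l'\<in>Am y. \<bar>l' - y\<bar> \<le> \<bar>l - y\<bar>))" unfolding T2_def using that by simp
    show ?thesis unfolding e by (rule someI_ex[OF ex])
  qed
  have T1X: "T1 \<in> X \<rightarrow>\<^sub>E X" using T1p unfolding Am_def by (auto simp: T1_def)
  have T2X: "T2 \<in> X \<rightarrow>\<^sub>E X" using T2p unfolding Am_def by (auto simp: T2_def)
  have T1opt: "- ls * \<bar>T1 y - y\<bar> + f (T1 y) = Mx X f ls y" if "y \<in> X" for y
    using T1p[OF that] unfolding Am_def g_def by auto
  have T2opt: "- ls * \<bar>T2 y - y\<bar> + f (T2 y) = Mx X f ls y" if "y \<in> X" for y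
    using T2p[OF that] unfolding Am_def g_def by auto
  define S where "S = (\<Sum>z\<in>X \<times> X. \<bar>fst z - snd z\<bar>)"
  have dS: "\<bar>l - y\<bar> \<le> S" if "l \<in> X" "y \<in> X" for l y
  proof -
    have "\<bar>fst (l, y) - snd (l, y)\<bar> \<le> S" unfolding S_def
      by (rule member_le_sum) (use that fin in auto)
    then show ?thesis by simp
  qed
  have S0: "0 \<le> S" unfolding S_def by (auto intro: sum_nonneg)
  have hd: "h * \<bar>l - y\<bar> \<le> \<gamma>" if "l \<in> X" "y \<in> X" "0 \<le> h" "h \<le> \<gamma> / (S + 1)" for l y h
  proof -
    have "h * \<bar>l - y\<bar> \<le> (\<gamma> / (S + 1)) * (S + 1)"
      using that dS[OF that(1,2)] S0 gpos by (intro mult_mono) auto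
    also have "\<dots> = \<gamma>" using S0 by simp
    finally show ?thesis .
  qed
  define D1 where "D1 = tcost X Pd T1"
  define D2 where "D2 = tcost X Pd T2"
  define SM where "SM = (\<Sum>y\<in>X. Mx X f ls y * Pd y)"
  have phls: "phi X \<delta> Pd f ls = ls * \<delta> + SM" unfolding phi_def SM_def by simp
  have sum1: "(\<Sum>l\<in>X. pushf X Pd T1 l * f l) = SM + ls * D1"
    unfolding SM_def D1_def by (rule sum_push_opt[OF fin T1X T1opt])
  have sum2: "(\<Sum>l\<in>X. pushf X Pd T2 l * f l) = SM + ls * D2"
    unfolding SM_def D2_def by (rule sum_push_opt[OF fin T2X T2opt])
  have inF1: "pushf X Pd T1 \<in> Fset X Pd \<delta>" if "D1 \<le> \<delta>"
    unfolding Fset_def using T1X that D1_def by blast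
  have inF2: "pushf X Pd T2 \<in> Fset X Pd \<delta>" if "D2 \<le> \<delta>"
    unfolding Fset_def using T2X that D2_def by blast
  show ?thesis
  proof (cases "ls = L0")
    case True
    have "phi X \<delta> Pd f ls \<le> phi X \<delta> Pd f lt" using lsmin lt0 unfolding L0_def by auto
    then have "L0 * \<delta> \<le> lt * \<delta>" using phi_big[of L0] phi_big[of lt] True unfolding L0_def by auto
    then have dz: "\<delta> = 0" using d0 unfolding L0_def by (simp add: algebra_simps)
    have "phi X \<delta> Pd f L0 = (\<Sum>y\<in>X. f y * Pd y)" using phi_big[of L0] dz unfolding L0_def by simp
    also have "\<dots> = (\<Sum>l\<in>X. pushf X Pd (restrict (\<lambda>y. y) X) l * f l)"
      using pushf_id[OF fin Pd] by (simp add: mult.commute)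
    finally have "phi X \<delta> Pd f L0 \<le> (\<Sum>l\<in>X. pushf X Pd (restrict (\<lambda>y. y) X) l * f l)" by simp
    moreover have "0 \<le> L0" using lt0 unfolding L0_def by simp
    ultimately show ?thesis using Fset_ne[OF d0, of X Pd] by blast
  next
    case False
    then have lsL': "ls < L0" using lsL by simp
    define h where "h = min (\<gamma> / (S + 1)) (L0 - ls)"
    have h0: "0 < h" unfolding h_def using gpos S0 lsL' by auto
    have hle: "h \<le> \<gamma> / (S + 1)" unfolding h_def by simp
    have up: "Mx X f (ls + h) y \<le> Mx X f ls y - h * \<bar>T1 y - y\<bar>" if y: "y \<in> X" for y
    proof (rule Mx_le[OF fin ne])
      fix l assume l: "l \<in> X"
      have e: "- (ls + h) * \<bar>l - y\<bar> + f l = g y l - h * \<bar>l - y\<bar>" unfolding g_def by (simp add: algebra_simps)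
      show "- (ls + h) * \<bar>l - y\<bar> + f l \<le> Mx X f ls y - h * \<bar>T1 y - y\<bar>"
      proof (cases "l \<in> Am y")
        case True
        then have "g y l = Mx X f ls y" unfolding Am_def by simp
        moreover have "\<bar>T1 y - y\<bar> \<le> \<bar>l - y\<bar>" using T1p[OF y] True by blast
        ultimately show ?thesis unfolding e using h0 by (simp add: mult_left_mono)
      next
        case False
        then have "g y l < Mx X f ls y" using gle[OF l, of y] l unfolding Am_def by auto
        then have "g y l \<le> Mx X f ls y - \<gamma>" using gap[OF y l] by simp
        moreover have "h * \<bar>T1 y - y\<bar> \<le> \<gamma>" using hd[OF _ y, of "T1 y" h] T1X y h0 hle by auto
        moreover have "0 \<le> h * \<bar>l - y\<bar>" using h0 by simp
        ultimately show ?thesis unfolding e by linarith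
      qed
    qed
    have "phi X \<delta> Pd f (ls + h) \<le> (ls + h) * \<delta> + (\<Sum>y\<in>X. (Mx X f ls y - h * \<bar>T1 y - y\<bar>) * Pd y)"
      unfolding phi_def using up Pnn by (auto intro!: sum_mono mult_right_mono)
    also have "\<dots> = phi X \<delta> Pd f ls + h * \<delta> - h * D1"
      unfolding phls SM_def D1_def tcost_def
      by (simp add: algebra_simps sum_subtractf sum_distrib_left)
    finally have "phi X \<delta> Pd f (ls + h) \<le> phi X \<delta> Pd f ls + h * \<delta> - h * D1" .
    moreover have "phi X \<delta> Pd f ls \<le> phi X \<delta> Pd f (ls + h)"
      using lsmin[of "ls + h"] ls0 h0 unfolding h_def by auto
    ultimately have "h * D1 \<le> h * \<delta>" by linarith
    then have D1d: "D1 \<le> \<delta>" using h0 by simp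
    show ?thesis
    proof (cases "ls = 0")
      case True
      have "phi X \<delta> Pd f 0 \<le> (\<Sum>l\<in>X. pushf X Pd T1 l * f l)"
        using sum1 phls True by simp
      then show ?thesis using inF1[OF D1d] by force
    next
      case False
      then have lsp: "ls > 0" using ls0 by simp
      define h' where "h' = min (\<gamma> / (S + 1)) ls"
      have h'0: "0 < h'" unfolding h'_def using gpos S0 lsp by auto
      have h'le: "h' \<le> \<gamma> / (S + 1)" unfolding h'_def by simp
      have low: "Mx X f (ls - h') y \<le> Mx X f ls y + h' * \<bar>T2 y - y\<bar>" if y: "y \<in> X" for y
      proof (rule Mx_le[OF fin ne])
        fix l assume l: "l \<in> X"
        have e: "- (ls - h') * \<bar>l - y\<bar> + f l = g y l + h' * \<bar>l - y\<bar>" unfolding g_def by (simp add: algebra_simps)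
        show "- (ls - h') * \<bar>l - y\<bar> + f l \<le> Mx X f ls y + h' * \<bar>T2 y - y\<bar>"
        proof (cases "l \<in> Am y")
          case True
          then have "g y l = Mx X f ls y" unfolding Am_def by simp
          moreover have "\<bar>l - y\<bar> \<le> \<bar>T2 y - y\<bar>" using T2p[OF y] True by blast
          ultimately show ?thesis unfolding e using h'0 by (simp add: mult_left_mono)
        next
          case False
          then have "g y l < Mx X f ls y" using gle[OF l, of y] l unfolding Am_def by auto
          then have "g y l \<le> Mx X f ls y - \<gamma>" using gap[OF y l] by simp
          moreover have "h' * \<bar>l - y\<bar> \<le> \<gamma>" using hd[OF l y, of h'] h'0 h'le by auto
          moreover have "0 \<le> h' * \<bar>T2 y - y\<bar>" using h'0 by simp
          ultimately show ?thesis unfolding e by linarith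
        qed
      qed
      have "phi X \<delta> Pd f (ls - h') \<le> (ls - h') * \<delta> + (\<Sum>y\<in>X. (Mx X f ls y + h' * \<bar>T2 y - y\<bar>) * Pd y)"
        unfolding phi_def using low Pnn by (auto intro!: sum_mono mult_right_mono)
      also have "\<dots> = phi X \<delta> Pd f ls - h' * \<delta> + h' * D2"
        unfolding phls SM_def D2_def tcost_def
        by (simp add: algebra_simps sum.distrib sum_distrib_left)
      finally have "phi X \<delta> Pd f (ls - h') \<le> phi X \<delta> Pd f ls - h' * \<delta> + h' * D2" .
      moreover have "phi X \<delta> Pd f ls \<le> phi X \<delta> Pd f (ls - h')"
        using lsmin[of "ls - h'"] lsL h'0 unfolding h'_def by auto
      ultimately have "h' * \<delta> \<le> h' * D2" by linarith
      then have D2d: "\<delta> \<le> D2" using h'0 by simp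
      show ?thesis
      proof (cases "D1 = \<delta>")
        case True
        then have "phi X \<delta> Pd f ls \<le> (\<Sum>l\<in>X. pushf X Pd T1 l * f l)" using sum1 phls by simp
        then show ?thesis using inF1[OF D1d] ls0 by force
      next
        case False
        then have D1l: "D1 < \<delta>" using D1d by simp
        show ?thesis
        proof (cases "D2 = \<delta>")
          case True
          then have "phi X \<delta> Pd f ls \<le> (\<Sum>l\<in>X. pushf X Pd T2 l * f l)" using sum2 phls by simp
          then show ?thesis using inF2 True ls0 by force
        next
          case False
          then have D2l: "\<delta> < D2" using D2d by simp
          define t where "t = thetaf X Pd \<delta> T1 T2"
          have tm: "t * (D2 - D1) = D2 - \<delta>"
            using D1l D2l unfolding t_def thetaf_def D1_def D2_def by simp
          have inF: "mixp X Pd \<delta> T1 T2 \<in> Fset X Pd \<delta>"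
            unfolding Fset_def using T1X T2X D1l D2l unfolding D1_def D2_def by force
          have "(\<Sum>l\<in>X. mixp X Pd \<delta> T1 T2 l * f l)
              = t * (\<Sum>l\<in>X. pushf X Pd T1 l * f l) + (1 - t) * (\<Sum>l\<in>X. pushf X Pd T2 l * f l)"
          proof -
            have "(\<Sum>l\<in>X. mixp X Pd \<delta> T1 T2 l * f l) = (\<Sum>l\<in>X. t * (pushf X Pd T1 l * f l) + (1 - t) * (pushf X Pd T2 l * f l))"
              unfolding mixp_def t_def[symmetric] by (rule sum.cong) (auto simp: algebra_simps)
            also have "\<dots> = t * (\<Sum>l\<in>X. pushf X Pd T1 l * f l) + (1 - t) * (\<Sum>l\<in>X. pushf X Pd T2 l * f l)"
              by (simp only: sum.distrib sum_distrib_left)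
            finally show ?thesis .
          qed
          also have "\<dots> = SM + ls * (D2 - t * (D2 - D1))" unfolding sum1 sum2 by (simp add: algebra_simps)
          also have "\<dots> = phi X \<delta> Pd f ls" using tm phls by simp
          finally show ?thesis using inF ls0 by (metis order_refl)
        qed
      qed
    qed
  qed
qed



locale rmdp =
  fixes X E U :: "real set" and A :: "'a set" and P :: "real \<Rightarrow> 'a \<Rightarrow> real \<Rightarrow> real"
    and \<pi> :: "real \<Rightarrow> 'a \<Rightarrow> real" and \<delta> :: real
  assumes finX: "finite X" and Xne: "X \<noteq> {}" and finA: "finite A" and Ane: "A \<noteq> {}"
    and EX: "E \<subseteq> X" and UX: "U \<subseteq> X" and EU: "E \<inter> U = {}" and d0: "\<delta> \<ge> 0"
    and Pdist: "\<And>x a. x \<in> X - (E \<union> U) \<Longrightarrow> a \<in> A \<Longrightarrow> is_dist X (P x a)"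
    and pidist: "\<And>x. x \<in> X \<Longrightarrow> is_dist A (\<pi> x)"
begin

abbreviation "H \<equiv> X - (E \<union> U)"

definition val :: "(real \<Rightarrow> 'a \<Rightarrow> real) \<Rightarrow> (real \<Rightarrow> real) \<Rightarrow> real" where
  "val u p = (\<Sum>l\<in>X. p l * (cost U l + (\<Sum>a'\<in>A. \<pi> l a' * u l a')))"

definition Fs :: "real \<Rightarrow> 'a \<Rightarrow> (real \<Rightarrow> real) set" where
  "Fs y a = Fset X (P y a) \<delta>"

definition Top :: "(real \<Rightarrow> 'a \<Rightarrow> real) \<Rightarrow> real \<Rightarrow> 'a \<Rightarrow> real" where
  "Top u y a = (if y \<in> H then Max (val u ` Fs y a) else 0)"

definition Rn :: "nat \<Rightarrow> real \<Rightarrow> 'a \<Rightarrow> real" where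
  "Rn n = (Top ^^ n) (\<lambda>_ _. 0)"

definition R :: "real \<Rightarrow> 'a \<Rightarrow> real" where
  "R y a = (SUP n. Rn n y a)"

definition good :: "(real \<Rightarrow> 'a \<Rightarrow> real) \<Rightarrow> bool" where
  "good u \<longleftrightarrow> (\<forall>y a. y \<notin> H \<longrightarrow> u y a = 0) \<and> (\<forall>y. \<forall>a\<in>A. 0 \<le> u y a \<and> u y a \<le> 1)"

lemma Fs_fin: "finite (Fs y a)"
  unfolding Fs_def by (rule Fset_finite[OF finX])

lemma Fs_ne: "Fs y a \<noteq> {}"
  unfolding Fs_def using Fset_ne[OF d0] by blast

lemma Fs_D: "y \<in> H \<Longrightarrow> a \<in> A \<Longrightarrow> p \<in> Fs y a \<Longrightarrow> is_dist X p \<and> wasserstein X p (P y a) \<le> \<delta>"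
  unfolding Fs_def by (rule Fset_sub[OF finX Pdist])

lemma pi_nn: "l \<in> X \<Longrightarrow> 0 \<le> \<pi> l a'"
  using pidist by (auto simp: is_dist_def)

lemma pi_sum: "l \<in> X \<Longrightarrow> (\<Sum>a'\<in>A. \<pi> l a') = 1"
  using pidist by (auto simp: is_dist_def)

lemma dist_nn: "is_dist X p \<Longrightarrow> 0 \<le> p l"
  by (auto simp: is_dist_def)

lemma val_as_sum: "val u p = (\<Sum>l\<in>X. p l * (\<lambda>l. cost U l + (\<Sum>a'\<in>A. \<pi> l a' * u l a')) l)"
  unfolding val_def by simp

lemma argmax_F:
  assumes y: "y \<in> H" and a: "a \<in> A" and q: "is_dist X q" and W: "wasserstein X q (P y a) \<le> \<delta>"
  shows "val u q \<le> Max (val u ` Fs y a)"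
proof -
  define f where "f l = cost U l + (\<Sum>a'\<in>A. \<pi> l a' * u l a')" for l
  obtain lam p where lam: "lam \<ge> 0" and p: "p \<in> Fs y a" and ph: "phi X \<delta> (P y a) f lam \<le> (\<Sum>l\<in>X. p l * f l)"
    using strong_dual[OF finX Xne Pdist[OF y a] d0, of f] unfolding Fs_def by blast
  have "val u q = (\<Sum>l\<in>X. q l * f l)" unfolding val_def f_def by simp
  also have "\<dots> \<le> phi X \<delta> (P y a) f lam" by (rule weak_dual[OF finX q Pdist[OF y a] W lam])
  also have "\<dots> \<le> val u p" using ph unfolding val_def f_def by simp
  also have "\<dots> \<le> Max (val u ` Fs y a)" using p Fs_fin by auto
  finally show ?thesis .
qed

lemma val_bounds:
  assumes g: "good u" and p: "is_dist X p"
  shows "0 \<le> val u p \<and> val u p \<le> 1"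
proof -
  have trm: "0 \<le> cost U l + (\<Sum>a'\<in>A. \<pi> l a' * u l a') \<and> cost U l + (\<Sum>a'\<in>A. \<pi> l a' * u l a') \<le> 1"
    if l: "l \<in> X" for l
  proof (cases "l \<in> H")
    case True
    then have c: "cost U l = 0" by (auto simp: cost_def)
    have "0 \<le> (\<Sum>a'\<in>A. \<pi> l a' * u l a')" using g pi_nn[OF l] by (auto simp: good_def intro!: sum_nonneg)
    moreover have "(\<Sum>a'\<in>A. \<pi> l a' * u l a') \<le> (\<Sum>a'\<in>A. \<pi> l a')"
      using g pi_nn[OF l] by (auto simp: good_def intro!: sum_mono mult_left_le)
    ultimately show ?thesis using c pi_sum[OF l] by simp
  next
    case False
    then have "\<And>a'. u l a' = 0" using g by (auto simp: good_def)
    then show ?thesis by (simp add: cost_def)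
  qed
  have "0 \<le> val u p" unfolding val_def using trm dist_nn[OF p] by (auto intro!: sum_nonneg)
  moreover have "val u p \<le> (\<Sum>l\<in>X. p l)" unfolding val_def
    using trm dist_nn[OF p] by (auto intro!: sum_mono mult_left_le)
  ultimately show ?thesis using p by (simp add: is_dist_def)
qed

lemma val_mono:
  assumes "\<forall>l\<in>X. \<forall>a'\<in>A. u l a' \<le> v l a'" and "\<And>l. 0 \<le> p l"
  shows "val u p \<le> val v p"
  unfolding val_def using assms pi_nn
  by (auto intro!: sum_mono mult_left_mono add_left_mono)

lemma Top_good: "good u \<Longrightarrow> good (Top u)"
proof -
  assume g: "good u"
  have "0 \<le> Top u y a \<and> Top u y a \<le> 1" if a: "a \<in> A" for y a
  proof (cases "y \<in> H")
    case True
    have all: "\<forall>p\<in>Fs y a. 0 \<le> val u p \<and> val u p \<le> 1" using val_bounds[OF g] Fs_D[OF True a] by blast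
    obtain p0 where p0: "p0 \<in> Fs y a" using Fs_ne by blast
    have "0 \<le> Max (val u ` Fs y a)" using all p0 Fs_fin by (meson Max_ge dual_order.trans finite_imageI image_eqI)
    moreover have "Max (val u ` Fs y a) \<le> 1" using all Fs_fin Fs_ne by (auto simp: Max_le_iff)
    ultimately show ?thesis using True by (simp add: Top_def)
  qed (auto simp: Top_def)
  then show ?thesis unfolding good_def by (auto simp: Top_def)
qed

lemma Top_mono:
  assumes "\<forall>l\<in>X. \<forall>a'\<in>A. u l a' \<le> v l a'" and a: "a \<in> A"
  shows "Top u y a \<le> Top v y a"
proof (cases "y \<in> H")
  case True
  have "\<forall>p\<in>Fs y a. val u p \<le> Max (val v ` Fs y a)"
  proof
    fix p assume p: "p \<in> Fs y a"
    have "val u p \<le> val v p" using val_mono[OF assms(1)] dist_nn Fs_D[OF True a p] by blast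
    also have "\<dots> \<le> Max (val v ` Fs y a)" using p Fs_fin by auto
    finally show "val u p \<le> Max (val v ` Fs y a)" .
  qed
  then show ?thesis using True Fs_fin Fs_ne by (auto simp: Top_def Max_le_iff)
qed (auto simp: Top_def)

lemma Rn_Suc: "Rn (Suc n) = Top (Rn n)"
  unfolding Rn_def by simp

lemma Rn_good: "good (Rn n)"
  by (induction n) (auto simp: Rn_Suc Top_good, simp add: Rn_def good_def)

lemma Rn_mono_Suc: "a \<in> A \<Longrightarrow> Rn n y a \<le> Rn (Suc n) y a"
proof (induction n arbitrary: y a)
  case 0
  then show ?case using Rn_good[of 1] by (simp add: Rn_def good_def)
next
  case (Suc n)
  have "Top (Rn n) y a \<le> Top (Rn (Suc n)) y a"
    by (rule Top_mono[OF _ Suc.prems]) (use Suc.IH in auto)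
  then show ?case by (simp add: Rn_Suc)
qed

lemma Rn_incseq: "a \<in> A \<Longrightarrow> incseq (\<lambda>n. Rn n y a)"
  by (rule incseq_SucI) (rule Rn_mono_Suc)

lemma Rn_bdd: "a \<in> A \<Longrightarrow> bdd_above (range (\<lambda>n. Rn n y a))"
  using Rn_good by (auto simp: good_def intro!: bdd_aboveI[of _ 1])

lemma Rn_lim: "a \<in> A \<Longrightarrow> (\<lambda>n. Rn n y a) \<longlonglongrightarrow> R y a"
  unfolding R_def by (rule LIMSEQ_incseq_SUP[OF Rn_bdd Rn_incseq])

lemma Rn_le_R: "a \<in> A \<Longrightarrow> Rn n y a \<le> R y a"
  unfolding R_def by (rule cSUP_upper[OF _ Rn_bdd]) auto

lemma Rn_offH: "y \<notin> H \<Longrightarrow> Rn n y a = 0"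
  using Rn_good by (auto simp: good_def)

lemma R_offH: "y \<notin> H \<Longrightarrow> R y a = 0"
  unfolding R_def using Rn_offH by simp

lemma R_good: "good R"
proof -
  have "0 \<le> R y a \<and> R y a \<le> 1" if a: "a \<in> A" for y a
  proof
    show "0 \<le> R y a" using Rn_le_R[OF a, of 0 y] by (simp add: Rn_def)
    show "R y a \<le> 1" unfolding R_def using Rn_good a by (auto simp: good_def intro!: cSUP_least)
  qed
  then show ?thesis unfolding good_def using R_offH by auto
qed

lemma val_lim:
  assumes "\<And>l a'. l \<in> X \<Longrightarrow> a' \<in> A \<Longrightarrow> (\<lambda>n. u n l a') \<longlonglongrightarrow> v l a'"
  shows "(\<lambda>n. val (u n) p) \<longlonglongrightarrow> val v p"
  unfolding val_def
  by (intro tendsto_intros tendsto_sum) (use assms in auto)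

lemma Bellman:
  assumes y: "y \<in> H" and a: "a \<in> A"
  shows "R y a = Max (val R ` Fs y a)"
proof (rule antisym)
  have allp: "\<forall>p\<in>Fs y a. 0 \<le> val R p" using val_bounds[OF R_good] Fs_D[OF y a] by blast
  obtain p0 where p0: "p0 \<in> Fs y a" using Fs_ne by blast
  have M0: "0 \<le> Max (val R ` Fs y a)" using allp p0 Fs_fin
    by (meson Max_ge dual_order.trans finite_imageI image_eqI)
  have step: "Rn n y a \<le> Max (val R ` Fs y a)" for n
  proof (cases n)
    case 0 then show ?thesis using M0 by (simp add: Rn_def)
  next
    case (Suc m)
    have "Rn n y a = Top (Rn m) y a" using Suc by (simp add: Rn_Suc)
    also have "\<dots> \<le> Top R y a" by (rule Top_mono[OF _ a]) (auto intro: Rn_le_R)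
    also have "\<dots> = Max (val R ` Fs y a)" using y by (simp add: Top_def)
    finally show ?thesis .
  qed
  have "(SUP n. Rn n y a) \<le> Max (val R ` Fs y a)"
    by (rule cSUP_least) (auto intro: step)
  then show "R y a \<le> Max (val R ` Fs y a)" by (simp only: R_def[of y a])
  show "Max (val R ` Fs y a) \<le> R y a"
  proof -
    have "val R p \<le> R y a" if p: "p \<in> Fs y a" for p
    proof (rule LIMSEQ_le_const2)
      show "(\<lambda>n. val (Rn n) p) \<longlonglongrightarrow> val R p" by (rule val_lim) (rule Rn_lim)
      show "\<exists>N. \<forall>n\<ge>N. val (Rn n) p \<le> R y a"
      proof (intro exI allI impI)
        fix n
        have "val (Rn n) p \<le> Max (val (Rn n) ` Fs y a)" using p Fs_fin by auto
        also have "\<dots> = Rn (Suc n) y a" using y by (simp add: Rn_Suc Top_def)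
        also have "\<dots> \<le> R y a" by (rule Rn_le_R[OF a])
        finally show "val (Rn n) p \<le> R y a" .
      qed
    qed
    then show ?thesis using Fs_fin Fs_ne by (auto simp: Max_le_iff)
  qed
qed

definition amb :: "(real \<Rightarrow> 'a \<Rightarrow> real \<Rightarrow> real) set" where
  "amb = amb_set X H A P \<delta>"

abbreviation fc :: "(real \<Rightarrow> 'a \<Rightarrow> real \<Rightarrow> real) \<Rightarrow> nat \<Rightarrow> real \<Rightarrow> 'a \<Rightarrow> real" where
  "fc Pt n \<equiv> fin_cost X E U A \<pi> Pt n"

lemma fc_Suc: "fc Pt (Suc n) y a = (if y \<in> H then val (fc Pt n) (Pt y a) else 0)"
  by (simp add: val_def)

lemma amb_D: "Pt \<in> amb \<Longrightarrow> y \<in> H \<Longrightarrow> a \<in> A \<Longrightarrow> is_dist X (Pt y a) \<and> wasserstein X (Pt y a) (P y a) \<le> \<delta>"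
  unfolding amb_def amb_set_def by blast

lemma fc_good: "Pt \<in> amb \<Longrightarrow> good (fc Pt n)"
proof (induction n)
  case 0 then show ?case by (simp add: good_def)
next
  case (Suc n)
  have "0 \<le> fc Pt (Suc n) y a \<and> fc Pt (Suc n) y a \<le> 1" if a: "a \<in> A" for y a
    using val_bounds[OF Suc.IH[OF Suc.prems]] amb_D[OF Suc.prems _ a] unfolding fc_Suc by auto
  then show ?case unfolding good_def by (auto simp del: fin_cost.simps simp: fc_Suc)
qed

lemma fc_le_Rn: "Pt \<in> amb \<Longrightarrow> a \<in> A \<Longrightarrow> fc Pt n y a \<le> Rn n y a"
proof (induction n arbitrary: y a)
  case 0 then show ?case by (simp add: Rn_def)
next
  case (Suc n)
  show ?case
  proof (cases "y \<in> H")
    case True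
    have "fc Pt (Suc n) y a = val (fc Pt n) (Pt y a)" using True by (simp only: fc_Suc if_True)
    also have "\<dots> \<le> val (Rn n) (Pt y a)"
      using Suc amb_D[OF Suc.prems(1) True Suc.prems(2)] by (intro val_mono) (auto simp: dist_nn)
    also have "\<dots> \<le> Max (val (Rn n) ` Fs y a)"
      using amb_D[OF Suc.prems(1) True Suc.prems(2)] by (intro argmax_F[OF True Suc.prems(2)]) auto
    also have "\<dots> = Rn (Suc n) y a" using True by (simp add: Rn_Suc Top_def)
    finally show ?thesis .
  next
    case False then show ?thesis unfolding fc_Suc if_not_P[OF False] Rn_offH[OF False] by simp
  qed
qed

lemma fc_bdd: "Pt \<in> amb \<Longrightarrow> a \<in> A \<Longrightarrow> bdd_above (range (\<lambda>n. fc Pt n y a))"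
  using fc_good by (auto simp: good_def intro!: bdd_aboveI[of _ 1])

lemma exp_le_R: "Pt \<in> amb \<Longrightarrow> a \<in> A \<Longrightarrow> exp_cost X E U A \<pi> Pt y a \<le> R y a"
  unfolding exp_cost_def
  by (rule cSUP_least) (auto intro: order_trans[OF fc_le_Rn Rn_le_R])

lemma fc_le_exp: "Pt \<in> amb \<Longrightarrow> a \<in> A \<Longrightarrow> fc Pt n y a \<le> exp_cost X E U A \<pi> Pt y a"
  unfolding exp_cost_def by (rule cSUP_upper[OF _ fc_bdd]) auto

lemma exp_le1: "Pt \<in> amb \<Longrightarrow> a \<in> A \<Longrightarrow> exp_cost X E U A \<pi> Pt y a \<le> 1"
  unfolding exp_cost_def using fc_good by (auto simp: good_def intro!: cSUP_least)

lemma exp_offH: "y \<notin> H \<Longrightarrow> exp_cost X E U A \<pi> Pt y a = 0"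
proof -
  assume y: "y \<notin> H"
  have "\<And>n. fc Pt n y a = 0"
  proof -
    fix n show "fc Pt n y a = 0" by (cases n) (simp, simp only: fc_Suc if_not_P[OF y])
  qed
  then show ?thesis unfolding exp_cost_def by simp
qed

definition Opt :: "real \<Rightarrow> 'a \<Rightarrow> (real \<Rightarrow> real) set" where
  "Opt y a = {p \<in> Fs y a. val R p = R y a}"

lemma Opt_ne: "y \<in> H \<Longrightarrow> a \<in> A \<Longrightarrow> Opt y a \<noteq> {}"
proof -
  assume y: "y \<in> H" and a: "a \<in> A"
  have "Max (val R ` Fs y a) \<in> val R ` Fs y a" using Fs_fin Fs_ne by (intro Max_in) auto
  then obtain p where "p \<in> Fs y a" "val R p = Max (val R ` Fs y a)" by (metis imageE)
  then show ?thesis using Bellman[OF y a] unfolding Opt_def by auto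
qed

definition esc :: "(real \<times> 'a) set \<Rightarrow> (real \<Rightarrow> real) \<Rightarrow> bool" where
  "esc B p \<longleftrightarrow> (\<exists>l\<in>X. 0 < p l \<and> (l \<notin> H \<or> (\<exists>a'\<in>A. 0 < \<pi> l a' \<and> (l, a') \<in> B)))"

definition stp :: "(real \<times> 'a) set \<Rightarrow> (real \<times> 'a) set" where
  "stp B = {(y, a). y \<in> H \<and> a \<in> A \<and> (\<exists>p\<in>Opt y a. esc B p)}"

definition Bs :: "nat \<Rightarrow> (real \<times> 'a) set" where
  "Bs k = (stp ^^ k) {}"

lemma Bs_0: "Bs 0 = {}" by (simp add: Bs_def)
lemma Bs_Suc: "Bs (Suc k) = stp (Bs k)" by (simp add: Bs_def)

lemma esc_mono: "B \<subseteq> B' \<Longrightarrow> esc B p \<Longrightarrow> esc B' p"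
  unfolding esc_def by blast

lemma stp_mono: "B \<subseteq> B' \<Longrightarrow> stp B \<subseteq> stp B'"
  unfolding stp_def using esc_mono by blast

lemma Bs_sub: "Bs k \<subseteq> H \<times> A"
  by (cases k) (auto simp: Bs_0 Bs_Suc stp_def)

lemma Bs_mono_Suc: "Bs k \<subseteq> Bs (Suc k)"
proof (induction k)
  case 0 then show ?case by (simp add: Bs_0)
next
  case (Suc k) then show ?case by (simp add: Bs_Suc stp_mono)
qed

lemma Bs_mono: "j \<le> k \<Longrightarrow> Bs j \<subseteq> Bs k"
  by (rule lift_Suc_mono_le[of Bs, OF Bs_mono_Suc])

lemma finHA: "finite (H \<times> A)" using finX finA by auto

lemma Bs_stab: "\<exists>K. Bs (Suc K) = Bs K"
proof (rule ccontr)
  assume "\<not> ?thesis"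
  then have ne: "\<And>k. Bs (Suc k) \<noteq> Bs k" by blast
  have "k \<le> card (Bs k)" for k
  proof (induction k)
    case 0 then show ?case by simp
  next
    case (Suc k)
    have "Bs k \<subset> Bs (Suc k)" using ne[of k] Bs_mono_Suc[of k] by blast
    then have "card (Bs k) < card (Bs (Suc k))"
      by (rule psubset_card_mono[OF finite_subset[OF Bs_sub finHA]])
    then show ?case using Suc by simp
  qed
  moreover have "card (Bs k) \<le> card (H \<times> A)" for k by (rule card_mono[OF finHA Bs_sub])
  ultimately have "Suc (card (H \<times> A)) \<le> card (H \<times> A)" using order_trans by blast
  then show False by simp
qed

definition Kst :: nat where "Kst = (SOME K. Bs (Suc K) = Bs K)"

lemma Kst: "Bs (Suc Kst) = Bs Kst"
  unfolding Kst_def using Bs_stab by (rule someI_ex)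

lemma Bs_Kst_add: "Bs (Kst + m) = Bs Kst"
proof (induction m)
  case 0 then show ?case by simp
next
  case (Suc m)
  have "Bs (Kst + Suc m) = stp (Bs (Kst + m))" by (simp add: Bs_Suc)
  also have "\<dots> = stp (Bs Kst)" using Suc by simp
  also have "\<dots> = Bs Kst" using Kst by (simp add: Bs_Suc)
  finally show ?case .
qed

lemma Bs_le_Kst: "Bs k \<subseteq> Bs Kst"
proof (cases "k \<le> Kst")
  case True then show ?thesis by (rule Bs_mono)
next
  case False
  then have "k = Kst + (k - Kst)" by simp
  then show ?thesis using Bs_Kst_add[of "k - Kst"] by simp
qed

definition rk :: "real \<Rightarrow> 'a \<Rightarrow> nat" where
  "rk y a = (LEAST k. (y, a) \<in> Bs k)"

definition PtS :: "real \<Rightarrow> 'a \<Rightarrow> real \<Rightarrow> real" where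
  "PtS y a = (if y \<in> H \<and> a \<in> A then
      (if (y, a) \<in> Bs Kst then (SOME p. p \<in> Opt y a \<and> esc (Bs (rk y a - 1)) p) else (SOME p. p \<in> Opt y a))
     else P y a)"

lemma rk_props:
  assumes "(y, a) \<in> Bs k"
  shows "1 \<le> rk y a" and "rk y a \<le> k" and "\<exists>p\<in>Opt y a. esc (Bs (rk y a - 1)) p"
proof -
  have m: "(y, a) \<in> Bs (rk y a)" unfolding rk_def using assms by (rule LeastI)
  show "rk y a \<le> k" unfolding rk_def using assms by (rule Least_le)
  show r1: "1 \<le> rk y a" using m by (cases "rk y a") (auto simp: Bs_0)
  have "Bs (rk y a) = stp (Bs (rk y a - 1))" using r1 Bs_Suc[of "rk y a - 1"] by simp
  then show "\<exists>p\<in>Opt y a. esc (Bs (rk y a - 1)) p" using m unfolding stp_def by auto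
qed

lemma PtS_opt: "y \<in> H \<Longrightarrow> a \<in> A \<Longrightarrow> PtS y a \<in> Opt y a"
proof -
  assume y: "y \<in> H" and a: "a \<in> A"
  show ?thesis
  proof (cases "(y, a) \<in> Bs Kst")
    case True
    obtain p where "p \<in> Opt y a \<and> esc (Bs (rk y a - 1)) p" using rk_props(3)[OF True] by blast
    then have "(SOME p. p \<in> Opt y a \<and> esc (Bs (rk y a - 1)) p) \<in> Opt y a \<and> esc (Bs (rk y a - 1)) (SOME p. p \<in> Opt y a \<and> esc (Bs (rk y a - 1)) p)"
      by (rule someI[where P="\<lambda>p. p \<in> Opt y a \<and> esc (Bs (rk y a - 1)) p"])
    then show ?thesis using y a True unfolding PtS_def by simp
  next
    case False
    obtain p where "p \<in> Opt y a" using Opt_ne[OF y a] by blast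
    then have "(SOME p. p \<in> Opt y a) \<in> Opt y a" by (rule someI[where P="\<lambda>p. p \<in> Opt y a"])
    then show ?thesis using y a False unfolding PtS_def by simp
  qed
qed

lemma PtS_esc: "(y, a) \<in> Bs Kst \<Longrightarrow> esc (Bs (rk y a - 1)) (PtS y a)"
proof -
  assume B: "(y, a) \<in> Bs Kst"
  then have y: "y \<in> H" and a: "a \<in> A" using Bs_sub by auto
  obtain p where "p \<in> Opt y a \<and> esc (Bs (rk y a - 1)) p" using rk_props(3)[OF B] by blast
  then have "(SOME p. p \<in> Opt y a \<and> esc (Bs (rk y a - 1)) p) \<in> Opt y a \<and> esc (Bs (rk y a - 1)) (SOME p. p \<in> Opt y a \<and> esc (Bs (rk y a - 1)) p)"
    by (rule someI[where P="\<lambda>p. p \<in> Opt y a \<and> esc (Bs (rk y a - 1)) p"])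
  then show ?thesis using y a B unfolding PtS_def by simp
qed

lemma PtS_F: "y \<in> H \<Longrightarrow> a \<in> A \<Longrightarrow> PtS y a \<in> Fs y a"
  using PtS_opt unfolding Opt_def by blast

lemma PtS_dist: "y \<in> H \<Longrightarrow> a \<in> A \<Longrightarrow> is_dist X (PtS y a)"
  using Fs_D PtS_F by blast

lemma PtS_amb: "PtS \<in> amb"
  unfolding amb_def amb_set_def using Fs_D PtS_F by blast

lemma PtS_val: "y \<in> H \<Longrightarrow> a \<in> A \<Longrightarrow> val R (PtS y a) = R y a"
  using PtS_opt unfolding Opt_def by blast

definition Mop :: "(real \<Rightarrow> 'a \<Rightarrow> real) \<Rightarrow> real \<Rightarrow> 'a \<Rightarrow> real" where
  "Mop u y a = (if y \<in> H then (\<Sum>l\<in>X. PtS y a l * (\<Sum>a'\<in>A. \<pi> l a' * u l a')) else 0)"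

definition L0 :: "real \<Rightarrow> 'a \<Rightarrow> real" where
  "L0 y a = (if y \<in> H then (\<Sum>l\<in>X. PtS y a l * cost U l) else 0)"

lemma val_split: "val u p = (\<Sum>l\<in>X. p l * cost U l) + (\<Sum>l\<in>X. p l * (\<Sum>a'\<in>A. \<pi> l a' * u l a'))"
  unfolding val_def by (simp add: distrib_left sum.distrib)

lemma fc_split: "fc PtS (Suc n) y a = L0 y a + Mop (fc PtS n) y a"
proof (cases "y \<in> H")
  case True then show ?thesis unfolding fc_Suc if_P[OF True] L0_def Mop_def by (simp add: val_split)
next
  case False then show ?thesis unfolding fc_Suc if_not_P[OF False] L0_def Mop_def by simp
qed

lemma conserving: "a \<in> A \<Longrightarrow> R y a = L0 y a + Mop R y a"
proof (cases "y \<in> H")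
  case True
  assume a: "a \<in> A"
  have "R y a = val R (PtS y a)" using PtS_val[OF True a] by simp
  then show ?thesis unfolding L0_def Mop_def if_P[OF True] by (simp add: val_split)
next
  case False then show ?thesis unfolding L0_def Mop_def if_not_P[OF False] using R_offH[OF False] by simp
qed

lemma Mop_add: "Mop (\<lambda>l a'. u l a' + v l a') y a = Mop u y a + Mop v y a"
  unfolding Mop_def by (simp add: distrib_left sum.distrib)

lemma Mop_scale: "Mop (\<lambda>l a'. c * u l a') y a = c * Mop u y a"
proof (cases "y \<in> H")
  case True
  have i: "\<And>l. (\<Sum>a'\<in>A. \<pi> l a' * (c * u l a')) = c * (\<Sum>a'\<in>A. \<pi> l a' * u l a')"
    by (simp add: sum_distrib_left mult.left_commute)
  show ?thesis unfolding Mop_def if_P[OF True] i by (simp add: sum_distrib_left mult.left_commute)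
next
  case False then show ?thesis unfolding Mop_def if_not_P[OF False] by simp
qed

lemma Mop_cong: "(\<And>l a'. l \<in> X \<Longrightarrow> a' \<in> A \<Longrightarrow> u l a' = v l a') \<Longrightarrow> Mop u y a = Mop v y a"
  unfolding Mop_def by simp

lemma decomp: "a \<in> A \<Longrightarrow> R y a = fc PtS k y a + (Mop ^^ k) R y a"
proof (induction k arbitrary: y a)
  case 0 then show ?case by simp
next
  case (Suc k)
  have "fc PtS (Suc k) y a + (Mop ^^ Suc k) R y a = L0 y a + (Mop (fc PtS k) y a + Mop ((Mop ^^ k) R) y a)"
    by (simp add: fc_split del: fin_cost.simps)
  also have "Mop (fc PtS k) y a + Mop ((Mop ^^ k) R) y a = Mop (\<lambda>l a'. fc PtS k l a' + (Mop ^^ k) R l a') y a"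
    by (rule Mop_add[symmetric])
  also have "\<dots> = Mop R y a" by (rule Mop_cong) (use Suc.IH in auto)
  also have "L0 y a + Mop R y a = R y a" using conserving[OF Suc.prems] by simp
  finally show ?case by simp
qed

lemma Mop_mono:
  assumes "\<And>l a'. l \<in> X \<Longrightarrow> a' \<in> A \<Longrightarrow> u l a' \<le> v l a'" and a: "a \<in> A"
  shows "Mop u y a \<le> Mop v y a"
proof (cases "y \<in> H")
  case True
  have nn: "\<And>l. 0 \<le> PtS y a l" using PtS_dist[OF True a] by (rule dist_nn)
  show ?thesis unfolding Mop_def if_P[OF True]
    using assms nn pi_nn by (auto intro!: sum_mono mult_left_mono)
next
  case False then show ?thesis unfolding Mop_def if_not_P[OF False] by simp
qed

lemma Mopk_mono:
  assumes "\<And>l a'. a' \<in> A \<Longrightarrow> u l a' \<le> v l a'" and a: "a \<in> A"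
  shows "(Mop ^^ k) u y a \<le> (Mop ^^ k) v y a"
  using a
proof (induction k arbitrary: y a)
  case 0 then show ?case using assms by simp
next
  case (Suc k)
  show ?case by simp (rule Mop_mono[OF _ Suc.prems], rule Suc.IH)
qed

lemma Mopk_scale: "(Mop ^^ k) (\<lambda>l a'. c * u l a') = (\<lambda>y a. c * (Mop ^^ k) u y a)"
proof (induction k)
  case 0 then show ?case by simp
next
  case (Suc k)
  show ?case by (rule ext, rule ext) (simp add: Suc.IH Mop_scale)
qed

definition oneH :: "real \<Rightarrow> 'a \<Rightarrow> real" where
  "oneH y a = (if y \<in> H then 1 else 0)"

definition W :: "nat \<Rightarrow> real \<Rightarrow> 'a \<Rightarrow> real" where
  "W k = (Mop ^^ k) oneH"

lemma W_Suc: "W (Suc k) = Mop (W k)" by (simp add: W_def)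

lemma Mop_01:
  assumes u: "\<And>l a'. l \<in> X \<Longrightarrow> a' \<in> A \<Longrightarrow> 0 \<le> u l a' \<and> u l a' \<le> 1" and a: "a \<in> A"
  shows "0 \<le> Mop u y a \<and> Mop u y a \<le> 1"
proof (cases "y \<in> H")
  case True
  have nn: "\<And>l. 0 \<le> PtS y a l" using PtS_dist[OF True a] by (rule dist_nn)
  have inner: "0 \<le> (\<Sum>a'\<in>A. \<pi> l a' * u l a') \<and> (\<Sum>a'\<in>A. \<pi> l a' * u l a') \<le> 1" if l: "l \<in> X" for l
  proof
    show "0 \<le> (\<Sum>a'\<in>A. \<pi> l a' * u l a')" using u[OF l] pi_nn[OF l] by (auto intro!: sum_nonneg)
    have "(\<Sum>a'\<in>A. \<pi> l a' * u l a') \<le> (\<Sum>a'\<in>A. \<pi> l a')"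
      using u[OF l] pi_nn[OF l] by (auto intro!: sum_mono mult_left_le)
    then show "(\<Sum>a'\<in>A. \<pi> l a' * u l a') \<le> 1" using pi_sum[OF l] by simp
  qed
  have "0 \<le> (\<Sum>l\<in>X. PtS y a l * (\<Sum>a'\<in>A. \<pi> l a' * u l a'))"
    using inner nn by (auto intro!: sum_nonneg)
  moreover have "(\<Sum>l\<in>X. PtS y a l * (\<Sum>a'\<in>A. \<pi> l a' * u l a')) \<le> (\<Sum>l\<in>X. PtS y a l)"
    using inner nn by (auto intro!: sum_mono mult_left_le)
  ultimately show ?thesis unfolding Mop_def if_P[OF True] using PtS_dist[OF True a] by (simp add: is_dist_def)
next
  case False then show ?thesis unfolding Mop_def if_not_P[OF False] by simp
qed

lemma W_01: "a \<in> A \<Longrightarrow> 0 \<le> W k y a \<and> W k y a \<le> 1"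
proof (induction k arbitrary: y a)
  case 0 then show ?case by (simp add: W_def oneH_def)
next
  case (Suc k) then show ?case unfolding W_Suc by (intro Mop_01) auto
qed

lemma W_offH: "y \<notin> H \<Longrightarrow> W k y a = 0"
proof -
  assume y: "y \<notin> H"
  show ?thesis
  proof (cases k)
    case 0 then show ?thesis unfolding W_def oneH_def using y by simp
  next
    case (Suc j) then show ?thesis unfolding Suc W_Suc Mop_def if_not_P[OF y] by simp
  qed
qed

lemma W_anti_Suc: "a \<in> A \<Longrightarrow> W (Suc k) y a \<le> W k y a"
proof (induction k arbitrary: y a)
  case 0
  show ?case
  proof (cases "y \<in> H")
    case True
    have "Mop oneH y a \<le> 1" using Mop_01[OF _ 0] by (auto simp: oneH_def)
    then show ?thesis using True by (simp add: W_def oneH_def)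
  next
    case False then show ?thesis using W_offH[OF False] by simp
  qed
next
  case (Suc k)
  have "Mop (W (Suc k)) y a \<le> Mop (W k) y a"
    by (rule Mop_mono[OF _ Suc.prems]) (use Suc.IH in simp)
  then show ?case by (simp only: W_Suc)
qed

lemma W_anti: "a \<in> A \<Longrightarrow> j \<le> k \<Longrightarrow> W k y a \<le> W j y a"
proof -
  assume a: "a \<in> A" and jk: "j \<le> k"
  have "W (j + m) y a \<le> W j y a" for m
  proof (induction m)
    case 0 then show ?case by simp
  next
    case (Suc m) then show ?case using W_anti_Suc[OF a, of "j + m" y] by simp
  qed
  then show ?thesis using jk by (metis le_add_diff_inverse)
qed

lemma esc_lt: "k \<le> Kst \<Longrightarrow> (y, a) \<in> Bs k \<Longrightarrow> W k y a < 1"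
proof (induction k arbitrary: y a rule: less_induct)
  case (less k)
  have B: "(y, a) \<in> Bs Kst" using less.prems Bs_mono by blast
  then have y: "y \<in> H" and a: "a \<in> A" using Bs_sub by auto
  define r where "r = rk y a - 1"
  have r1: "Suc r = rk y a" using rk_props(1)[OF less.prems(2)] unfolding r_def by simp
  have rk: "rk y a \<le> k" by (rule rk_props(2)[OF less.prems(2)])
  have IH: "W r l a' < 1" if "(l, a') \<in> Bs r" for l a'
    using less.IH[of r l a'] that r1 rk less.prems(1) by simp
  define p where "p = PtS y a"
  have pd: "is_dist X p" unfolding p_def by (rule PtS_dist[OF y a])
  have e: "esc (Bs r) p" unfolding p_def r_def by (rule PtS_esc[OF B])
  define i where "i l = (\<Sum>a'\<in>A. \<pi> l a' * W r l a')" for l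
  have i01: "0 \<le> i l \<and> i l \<le> 1" if "l \<in> X" for l
  proof -
    have "0 \<le> i l" unfolding i_def using W_01 pi_nn[OF that] by (auto intro!: sum_nonneg)
    moreover have "i l \<le> (\<Sum>a'\<in>A. \<pi> l a')" unfolding i_def
      using W_01 pi_nn[OF that] by (auto intro!: sum_mono mult_left_le)
    ultimately show ?thesis using pi_sum[OF that] by simp
  qed
  have "(\<Sum>l\<in>X. p l * i l) < (\<Sum>l\<in>X. p l)"
  proof (rule sum_strict_mono_ex1[OF finX])
    show "\<forall>l\<in>X. p l * i l \<le> p l" using i01 dist_nn[OF pd] by (auto intro: mult_left_le)
    obtain l where l: "l \<in> X" and pl: "0 < p l" and alt: "l \<notin> H \<or> (\<exists>a'\<in>A. 0 < \<pi> l a' \<and> (l, a') \<in> Bs r)"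
      using e unfolding esc_def by blast
    have "i l < 1"
    proof (cases "l \<in> H")
      case False
      then have "i l = 0" unfolding i_def using W_offH by simp
      then show ?thesis by simp
    next
      case True
      then obtain a' where a': "a' \<in> A" "0 < \<pi> l a'" "(l, a') \<in> Bs r" using alt by blast
      have "i l < (\<Sum>b\<in>A. \<pi> l b)" unfolding i_def
      proof (rule sum_strict_mono_ex1[OF finA])
        show "\<forall>b\<in>A. \<pi> l b * W r l b \<le> \<pi> l b" using W_01 pi_nn[OF l] by (auto intro: mult_left_le)
        have "\<pi> l a' * W r l a' < \<pi> l a'" using a' IH[OF a'(3)] by simp
        then show "\<exists>b\<in>A. \<pi> l b * W r l b < \<pi> l b" using a' by blast
      qed
      then show ?thesis using pi_sum[OF l] by simp
    qed
    then have "p l * i l < p l" using pl by simp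
    then show "\<exists>l\<in>X. p l * i l < p l" using l by blast
  qed
  then have "W (Suc r) y a < 1" unfolding W_Suc Mop_def if_P[OF y] i_def p_def[symmetric]
    using pd by (simp add: is_dist_def)
  moreover have "W k y a \<le> W (Suc r) y a" using W_anti[OF a] r1 rk by simp
  ultimately show ?case by simp
qed

definition Splus :: "(real \<times> 'a) set" where
  "Splus = {(y, a). y \<in> H \<and> a \<in> A \<and> 0 < R y a}"

lemma R_nn: "a \<in> A \<Longrightarrow> 0 \<le> R y a" using R_good by (auto simp: good_def)
lemma R_le1: "a \<in> A \<Longrightarrow> R y a \<le> 1" using R_good by (auto simp: good_def)

lemma Splus_sub: "Splus \<subseteq> Bs Kst"
proof (rule ccontr)
  assume "\<not> Splus \<subseteq> Bs Kst"
  define C where "C = Splus - Bs Kst"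
  obtain y0 a0 where c0: "(y0, a0) \<in> C" using \<open>\<not> Splus \<subseteq> Bs Kst\<close> unfolding C_def by auto
  have CS: "C \<subseteq> H \<times> A" unfolding C_def Splus_def by auto
  have finC: "finite C" using finite_subset[OF CS finHA] .
  have Cpos: "\<And>y a. (y, a) \<in> C \<Longrightarrow> y \<in> H \<and> a \<in> A \<and> 0 < R y a" unfolding C_def Splus_def by auto
  have noesc: "\<not> esc (Bs Kst) p" if ya: "(y, a) \<in> C" and p: "p \<in> Opt y a" for y a p
  proof
    assume "esc (Bs Kst) p"
    then have "(y, a) \<in> stp (Bs Kst)" using p Cpos[OF ya] unfolding stp_def by auto
    then have "(y, a) \<in> Bs Kst" using Kst by (simp add: Bs_Suc[symmetric])
    then show False using ya unfolding C_def by simp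
  qed
  define Qs where "Qs = (\<lambda>(s, p). val R p / R (fst s) (snd s)) ` (SIGMA s:C. Fs (fst s) (snd s) - Opt (fst s) (snd s))"
  have finQs: "finite Qs" unfolding Qs_def
    by (rule finite_imageI, rule finite_SigmaI[OF finC]) (use Fs_fin in auto)
  define m where "m = Max (insert 0 Qs)"
  have m0: "0 \<le> m" unfolding m_def using finQs by simp
  have Qlt: "q < 1" if "q \<in> Qs" for q
  proof -
    from that obtain sp where sp: "sp \<in> (SIGMA s:C. Fs (fst s) (snd s) - Opt (fst s) (snd s))"
      and q0: "q = (\<lambda>(s, p). val R p / R (fst s) (snd s)) sp" unfolding Qs_def by blast
    obtain y a p where spe: "sp = ((y, a), p)" by (metis prod.exhaust)
    have ya: "(y, a) \<in> C" and p: "p \<in> Fs y a" "p \<notin> Opt y a" and q: "q = val R p / R y a"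
      using sp q0 unfolding spe by auto
    have yH: "y \<in> H" and aA: "a \<in> A" and Rp: "0 < R y a" using Cpos[OF ya] by auto
    have "val R p \<le> Max (val R ` Fs y a)" using p Fs_fin by auto
    then have "val R p \<le> R y a" using Bellman[OF yH aA] by simp
    moreover have "val R p \<noteq> R y a" using p unfolding Opt_def by auto
    ultimately have "val R p < R y a" by simp
    then show ?thesis unfolding q using Rp by simp
  qed
  have m1: "m < 1" unfolding m_def using finQs Qlt by simp
  have subopt: "val R p \<le> m * R y a" if ya: "(y, a) \<in> C" and p: "p \<in> Fs y a" "p \<notin> Opt y a" for y a p
  proof -
    have "val R p / R y a \<in> Qs" unfolding Qs_def using ya p by force
    then have "val R p / R y a \<le> m" unfolding m_def using finQs by simp
    then show ?thesis using Cpos[OF ya] by (simp add: pos_divide_le_eq)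
  qed
  define R' where "R' y a = (if (y, a) \<in> C then m * R y a else R y a)" for y a
  have R'_le: "R' y a \<le> R y a" if "a \<in> A" for y a
    unfolding R'_def using m0 m1 R_nn[OF that] by (auto intro: mult_left_le_one_le)
  have optval: "val R' p = m * R y a" if ya: "(y, a) \<in> C" and p: "p \<in> Opt y a" for y a p
  proof -
    have yH: "y \<in> H" and aA: "a \<in> A" using Cpos[OF ya] by auto
    have pF: "p \<in> Fs y a" and pv: "val R p = R y a" using p unfolding Opt_def by auto
    have pd: "is_dist X p" using Fs_D[OF yH aA pF] by blast
    have ne: "\<not> esc (Bs Kst) p" by (rule noesc[OF ya p])
    have trm: "p l * (cost U l + (\<Sum>a'\<in>A. \<pi> l a' * R' l a')) = m * (p l * (cost U l + (\<Sum>a'\<in>A. \<pi> l a' * R l a')))"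
      if l: "l \<in> X" for l
    proof (cases "p l = 0")
      case True then show ?thesis by simp
    next
      case False
      then have pl: "0 < p l" using dist_nn[OF pd, of l] by simp
      then have lH: "l \<in> H" and nb: "\<And>a'. a' \<in> A \<Longrightarrow> 0 < \<pi> l a' \<Longrightarrow> (l, a') \<notin> Bs Kst"
        using ne l unfolding esc_def by auto
      have c: "cost U l = 0" using lH by (simp add: cost_def)
      have "(\<Sum>a'\<in>A. \<pi> l a' * R' l a') = (\<Sum>a'\<in>A. m * (\<pi> l a' * R l a'))"
      proof (rule sum.cong[OF refl])
        fix a' assume a': "a' \<in> A"
        show "\<pi> l a' * R' l a' = m * (\<pi> l a' * R l a')"
        proof (cases "\<pi> l a' = 0")
          case True then show ?thesis by simp
        next
          case False
          then have "0 < \<pi> l a'" using pi_nn[OF l, of a'] by simp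
          then have nB: "(l, a') \<notin> Bs Kst" using nb[OF a'] by simp
          show ?thesis
          proof (cases "(l, a') \<in> C")
            case True then show ?thesis unfolding R'_def by simp
          next
            case False
            then have "(l, a') \<notin> Splus" using nB unfolding C_def by simp
            then have "R l a' = 0" using lH a' R_nn[OF a', of l] unfolding Splus_def by simp
            then show ?thesis unfolding R'_def using False by simp
          qed
        qed
      qed
      then show ?thesis using c by (simp add: sum_distrib_left[symmetric] algebra_simps)
    qed
    have "val R' p = (\<Sum>l\<in>X. m * (p l * (cost U l + (\<Sum>a'\<in>A. \<pi> l a' * R l a'))))"
      unfolding val_def using trm by (rule sum.cong[OF refl])
    also have "\<dots> = m * val R p" unfolding val_def by (simp add: sum_distrib_left)
    finally show ?thesis using pv by simp
  qed
  have Rn_le: "Rn n y a \<le> R' y a" if "a \<in> A" for n y a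
    using that
  proof (induction n arbitrary: y a)
    case 0 then show ?case using R_nn[OF 0] m0 by (simp add: Rn_def R'_def)
  next
    case (Suc n)
    show ?case
    proof (cases "(y, a) \<in> C")
      case False
      then show ?thesis using Rn_le_R[OF Suc.prems, of "Suc n" y] unfolding R'_def by simp
    next
      case True
      have yH: "y \<in> H" and aA: "a \<in> A" using Cpos[OF True] by auto
      have "val (Rn n) p \<le> m * R y a" if pF: "p \<in> Fs y a" for p
      proof -
        have pd: "is_dist X p" using Fs_D[OF yH aA pF] by blast
        have "val (Rn n) p \<le> val R' p" by (rule val_mono) (use Suc.IH dist_nn[OF pd] in auto)
        also have "\<dots> \<le> m * R y a"
        proof (cases "p \<in> Opt y a")
          case True then show ?thesis using optval[OF \<open>(y, a) \<in> C\<close>] by simp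
        next
          case False
          have "val R' p \<le> val R p" by (rule val_mono) (use R'_le dist_nn[OF pd] in auto)
          also have "\<dots> \<le> m * R y a" by (rule subopt[OF \<open>(y, a) \<in> C\<close> pF False])
          finally show ?thesis .
        qed
        finally show ?thesis .
      qed
      then have "Max (val (Rn n) ` Fs y a) \<le> m * R y a" using Fs_fin Fs_ne by (auto simp: Max_le_iff)
      then show ?thesis unfolding Rn_Suc Top_def R'_def using yH True by simp
    qed
  qed
  have y0: "y0 \<in> H" and a0: "a0 \<in> A" and R0: "0 < R y0 a0" using Cpos[OF c0] by auto
  have "(SUP n. Rn n y0 a0) \<le> R' y0 a0" by (rule cSUP_least) (use Rn_le[OF a0] in auto)
  then have "R y0 a0 \<le> m * R y0 a0" unfolding R'_def using c0 by (simp add: R_def[of y0 a0])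
  moreover have "m * R y0 a0 < 1 * R y0 a0" using R0 m1 by (intro mult_strict_right_mono) auto
  ultimately show False by simp
qed

definition oneS :: "real \<Rightarrow> 'a \<Rightarrow> real" where
  "oneS y a = (if (y, a) \<in> Splus then 1 else 0)"

lemma R_le_oneS: "a \<in> A \<Longrightarrow> R y a \<le> oneS y a"
proof -
  assume a: "a \<in> A"
  show ?thesis
  proof (cases "(y, a) \<in> Splus")
    case True then show ?thesis using R_le1[OF a] by (simp add: oneS_def)
  next
    case False
    then have "\<not> (y \<in> H \<and> 0 < R y a)" using a unfolding Splus_def by simp
    then have "R y a \<le> 0" using R_offH[of y a] by (cases "y \<in> H") auto
    then show ?thesis using False by (simp add: oneS_def)
  qed
qed

lemma Mop_supp:
  assumes u: "\<And>l a'. l \<in> X \<Longrightarrow> a' \<in> A \<Longrightarrow> (l, a') \<notin> Splus \<Longrightarrow> u l a' = 0"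
    and a: "a \<in> A" and ns: "(y, a) \<notin> Splus"
  shows "Mop u y a = 0"
proof (cases "y \<in> H")
  case False then show ?thesis unfolding Mop_def if_not_P[OF False] by simp
next
  case True
  define p where "p = PtS y a"
  have pd: "is_dist X p" unfolding p_def by (rule PtS_dist[OF True a])
  have R0: "R y a = 0" using ns True a R_nn[OF a, of y] unfolding Splus_def by simp
  have tnn: "0 \<le> p l * (cost U l + (\<Sum>a'\<in>A. \<pi> l a' * R l a'))" if l: "l \<in> X" for l
  proof -
    have "0 \<le> cost U l" by (simp add: cost_def)
    moreover have "0 \<le> (\<Sum>a'\<in>A. \<pi> l a' * R l a')" using pi_nn[OF l] R_nn by (auto intro: sum_nonneg)
    ultimately show ?thesis using dist_nn[OF pd, of l] by simp
  qed
  have "(\<Sum>l\<in>X. p l * (cost U l + (\<Sum>a'\<in>A. \<pi> l a' * R l a'))) = 0"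
    using PtS_val[OF True a] R0 unfolding p_def val_def by simp
  moreover have "(\<Sum>l\<in>X. p l * (cost U l + (\<Sum>a'\<in>A. \<pi> l a' * R l a'))) = 0 \<longleftrightarrow>
      (\<forall>l\<in>X. p l * (cost U l + (\<Sum>a'\<in>A. \<pi> l a' * R l a')) = 0)"
    by (rule sum_nonneg_eq_0_iff[OF finX]) (rule tnn)
  ultimately have t0: "\<forall>l\<in>X. p l * (cost U l + (\<Sum>a'\<in>A. \<pi> l a' * R l a')) = 0" by blast
  have "p l * (\<Sum>a'\<in>A. \<pi> l a' * u l a') = 0" if l: "l \<in> X" for l
  proof (cases "p l = 0")
    case True then show ?thesis by simp
  next
    case False
    have "p l * (cost U l + (\<Sum>a'\<in>A. \<pi> l a' * R l a')) = 0" using t0 l by blast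
    then have z: "cost U l + (\<Sum>a'\<in>A. \<pi> l a' * R l a') = 0" using False by simp
    have nn1: "0 \<le> cost U l" by (simp add: cost_def)
    have nn2: "0 \<le> \<pi> l a' * R l a'" if "a' \<in> A" for a' using pi_nn[OF l, of a'] R_nn[OF that, of l] by simp
    have "(\<Sum>a'\<in>A. \<pi> l a' * R l a') = 0" using z nn1 sum_nonneg[of A "\<lambda>a'. \<pi> l a' * R l a'", OF nn2] by linarith
    moreover have "(\<Sum>a'\<in>A. \<pi> l a' * R l a') = 0 \<longleftrightarrow> (\<forall>a'\<in>A. \<pi> l a' * R l a' = 0)"
      by (rule sum_nonneg_eq_0_iff[OF finA]) (rule nn2)
    ultimately have z2: "\<forall>a'\<in>A. \<pi> l a' * R l a' = 0" by blast
    have hz: "\<pi> l a' * u l a' = 0" if a': "a' \<in> A" for a'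
    proof (cases "\<pi> l a' = 0")
      case True then show ?thesis by simp
    next
      case False
      have "\<pi> l a' * R l a' = 0" using z2 a' by blast
      then have "R l a' = 0" using False by simp
      then have "(l, a') \<notin> Splus" unfolding Splus_def by simp
      then show ?thesis using u[OF l a'] by simp
    qed
    have "(\<Sum>a'\<in>A. \<pi> l a' * u l a') = 0" by (rule sum.neutral) (use hz in blast)
    then show ?thesis by simp
  qed
  then have "(\<Sum>l\<in>X. p l * (\<Sum>a'\<in>A. \<pi> l a' * u l a')) = 0" by (intro sum.neutral) blast
  then show ?thesis unfolding Mop_def if_P[OF True] p_def[symmetric] by simp
qed

lemma Vk_supp: "a \<in> A \<Longrightarrow> (y, a) \<notin> Splus \<Longrightarrow> (Mop ^^ k) oneS y a = 0"
proof (induction k arbitrary: y a)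
  case 0 then show ?case by (simp add: oneS_def)
next
  case (Suc k)
  show ?case by simp (rule Mop_supp[OF _ Suc.prems], rule Suc.IH)
qed

lemma R_le_exp: "a \<in> A \<Longrightarrow> R y a \<le> exp_cost X E U A \<pi> PtS y a"
proof -
  assume a: "a \<in> A"
  have finS: "finite Splus" using finite_subset[OF _ finHA, of Splus] unfolding Splus_def by auto
  define c where "c = Max (insert 0 ((\<lambda>s. W Kst (fst s) (snd s)) ` Splus))"
  have c0: "0 \<le> c" unfolding c_def using finS by simp
  have c1: "c < 1" unfolding c_def using finS esc_lt[of Kst] Splus_sub by auto
  have VK: "(Mop ^^ Kst) oneS y a \<le> c * oneS y a" if a: "a \<in> A" for y a
  proof (cases "(y, a) \<in> Splus")
    case True
    have "(Mop ^^ Kst) oneS y a \<le> (Mop ^^ Kst) oneH y a"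
      by (rule Mopk_mono[OF _ a]) (auto simp: oneS_def oneH_def Splus_def)
    also have "\<dots> \<le> c"
    proof -
      have "W Kst y a \<in> (\<lambda>s. W Kst (fst s) (snd s)) ` Splus" using True by force
      then show ?thesis unfolding c_def W_def[symmetric] using finS by (auto intro!: Max_ge)
    qed
    finally show ?thesis using True by (simp add: oneS_def)
  next
    case False then show ?thesis using Vk_supp[OF a False] by (simp add: oneS_def)
  qed
  have geo: "(Mop ^^ (Kst * j)) oneS y a \<le> c ^ j * oneS y a" if a: "a \<in> A" for j y a
    using a
  proof (induction j arbitrary: y a)
    case 0 then show ?case by simp
  next
    case (Suc j)
    have "(Mop ^^ (Kst * Suc j)) oneS y a = (Mop ^^ (Kst * j)) ((Mop ^^ Kst) oneS) y a"
    proof -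
      have e: "Kst * Suc j = Kst * j + Kst" by simp
      show ?thesis by (simp only: e funpow_add comp_apply)
    qed
    also have "\<dots> \<le> (Mop ^^ (Kst * j)) (\<lambda>l a'. c * oneS l a') y a"
      by (rule Mopk_mono[OF _ Suc.prems]) (rule VK)
    also have "\<dots> = c * (Mop ^^ (Kst * j)) oneS y a" by (simp add: Mopk_scale)
    also have "\<dots> \<le> c * (c ^ j * oneS y a)" using Suc.IH[OF Suc.prems] c0 by (rule mult_left_mono)
    finally show ?case by simp
  qed
  have bound: "R y a \<le> exp_cost X E U A \<pi> PtS y a + c ^ j" for j
  proof -
    have "R y a = fc PtS (Kst * j) y a + (Mop ^^ (Kst * j)) R y a" by (rule decomp[OF a])
    also have "\<dots> \<le> exp_cost X E U A \<pi> PtS y a + (Mop ^^ (Kst * j)) oneS y a"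
      using fc_le_exp[OF PtS_amb a] Mopk_mono[OF R_le_oneS a] by (intro add_mono) auto
    also have "(Mop ^^ (Kst * j)) oneS y a \<le> c ^ j"
    proof -
      have g: "(Mop ^^ (Kst * j)) oneS y a \<le> c ^ j * oneS y a" by (rule geo[OF a])
      have p0: "0 \<le> c ^ j" using c0 by simp
      have "c ^ j * oneS y a \<le> c ^ j" using p0 by (cases "(y, a) \<in> Splus") (simp_all add: oneS_def)
      then show ?thesis using g by linarith
    qed
    finally show ?thesis by simp
  qed
  show ?thesis
  proof (rule ccontr)
    assume "\<not> ?thesis"
    then have "0 < R y a - exp_cost X E U A \<pi> PtS y a" by simp
    then obtain j where "c ^ j < R y a - exp_cost X E U A \<pi> PtS y a" using real_arch_pow_inv c1 by blast
    then show False using bound[of j] by simp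
  qed
qed

lemma rQ_eq: "a \<in> A \<Longrightarrow> robust_Q X E U A \<pi> P \<delta> y a = R y a"
proof -
  assume a: "a \<in> A"
  have ne: "amb \<noteq> {}" using PtS_amb by blast
  have "(SUP Pt\<in>amb. exp_cost X E U A \<pi> Pt y a) \<le> R y a"
    by (rule cSUP_least[OF ne]) (rule exp_le_R[OF _ a])
  moreover have "exp_cost X E U A \<pi> PtS y a \<le> (SUP Pt\<in>amb. exp_cost X E U A \<pi> Pt y a)"
    by (rule cSUP_upper[OF PtS_amb]) (use exp_le1[OF _ a] in \<open>auto intro!: bdd_aboveI[of _ 1]\<close>)
  ultimately have "(SUP Pt\<in>amb. exp_cost X E U A \<pi> Pt y a) = R y a"
    using R_le_exp[OF a, of y] by linarith
  then show ?thesis unfolding robust_Q_def amb_def by simp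
qed

lemma rQ_offH: "y \<notin> H \<Longrightarrow> robust_Q X E U A \<pi> P \<delta> y a = 0"
proof -
  assume y: "y \<notin> H"
  have ne: "amb \<noteq> {}" using PtS_amb by blast
  show ?thesis unfolding robust_Q_def amb_def[symmetric] using exp_offH[OF y] ne by simp
qed

lemma main:
  assumes x: "x \<in> H" and a: "a \<in> A"
  shows "robust_Q X E U A \<pi> P \<delta> x a =
    (INF lam\<in>{0..}. lam * \<delta> + (\<Sum>y\<in>X. (MAX l\<in>X. - lam * \<bar>l - y\<bar> + cost U l
        + (\<Sum>a'\<in>A. robust_Q X E U A \<pi> P \<delta> l a' * \<pi> l a')) * P x a y))"
proof -
  define f where "f l = cost U l + (\<Sum>a'\<in>A. robust_Q X E U A \<pi> P \<delta> l a' * \<pi> l a')" for l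
  have fR: "f l = cost U l + (\<Sum>a'\<in>A. \<pi> l a' * R l a')" for l
  proof (cases "l \<in> H")
    case True then show ?thesis unfolding f_def using rQ_eq by (simp add: mult.commute)
  next
    case False then show ?thesis unfolding f_def using rQ_offH[OF False] R_offH[OF False] by simp
  qed
  have valf: "val R p = (\<Sum>l\<in>X. p l * f l)" for p unfolding val_def fR by simp
  have expr: "lam * \<delta> + (\<Sum>y\<in>X. (MAX l\<in>X. - lam * \<bar>l - y\<bar> + cost U l
        + (\<Sum>a'\<in>A. robust_Q X E U A \<pi> P \<delta> l a' * \<pi> l a')) * P x a y) = phi X \<delta> (P x a) f lam" for lam
    unfolding phi_def Mx_def f_def by (simp only: add.assoc)
  have lower: "R x a \<le> phi X \<delta> (P x a) f lam" if lam: "lam \<ge> 0" for lam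
  proof -
    have "Max (val R ` Fs x a) \<in> val R ` Fs x a" using Fs_fin Fs_ne by (intro Max_in) auto
    then obtain p where p: "p \<in> Fs x a" "val R p = Max (val R ` Fs x a)" by (metis imageE)
    have "R x a = (\<Sum>l\<in>X. p l * f l)" using Bellman[OF x a] p valf by simp
    also have "\<dots> \<le> phi X \<delta> (P x a) f lam"
      using Fs_D[OF x a p(1)] by (intro weak_dual[OF finX _ Pdist[OF x a] _ lam]) auto
    finally show ?thesis .
  qed
  obtain lam p where lam: "lam \<ge> 0" and p: "p \<in> Fs x a" and ph: "phi X \<delta> (P x a) f lam \<le> (\<Sum>l\<in>X. p l * f l)"
    using strong_dual[OF finX Xne Pdist[OF x a] d0, of f] unfolding Fs_def by blast
  have upper: "phi X \<delta> (P x a) f lam \<le> R x a"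
  proof -
    have "(\<Sum>l\<in>X. p l * f l) = val R p" using valf by simp
    also have "\<dots> \<le> Max (val R ` Fs x a)" using p Fs_fin by auto
    also have "\<dots> = R x a" using Bellman[OF x a] by simp
    finally show ?thesis using ph by simp
  qed
  have "(INF lam\<in>{0..}. phi X \<delta> (P x a) f lam) = R x a"
  proof (rule antisym)
    show "(INF lam\<in>{0..}. phi X \<delta> (P x a) f lam) \<le> R x a"
    proof -
      have bb: "bdd_below ((\<lambda>lam. phi X \<delta> (P x a) f lam) ` {0..})"
        using lower by (auto intro!: bdd_belowI[of _ "R x a"])
      have "(INF lam\<in>{0..}. phi X \<delta> (P x a) f lam) \<le> phi X \<delta> (P x a) f lam"
        by (rule cINF_lower[OF bb]) (use lam in simp)
      then show ?thesis using upper by linarith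
    qed
    show "R x a \<le> (INF lam\<in>{0..}. phi X \<delta> (P x a) f lam)"
      using lower by (intro cINF_greatest) auto
  qed
  then show ?thesis unfolding expr using rQ_eq[OF a] by simp
qed

end


theorem mainTheorem4:
  fixes X E U :: "real set" and A :: "'a set"
    and P :: "real \<Rightarrow> 'a \<Rightarrow> real \<Rightarrow> real" and \<pi> :: "real \<Rightarrow> 'a \<Rightarrow> real"
    and \<delta> :: real and x :: real and a :: 'a
  assumes "finite X" and "finite A" and "A \<noteq> {}"
    and "E \<subseteq> X" and "U \<subseteq> X" and "E \<inter> U = {}"
    and "\<delta> \<ge> 0"
    and "\<And>x a. x \<in> X - (E \<union> U) \<Longrightarrow> a \<in> A \<Longrightarrow> is_dist X (P x a)"
    and "\<And>x. x \<in> X \<Longrightarrow> is_dist A (\<pi> x)"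
    and "x \<in> X - (E \<union> U)" and "a \<in> A"
  shows "robust_Q X E U A \<pi> P \<delta> x a =
    (INF lam\<in>{0..}. lam * \<delta> + (\<Sum>y\<in>X. (MAX l\<in>X. - lam * \<bar>l - y\<bar> + cost U l
        + (\<Sum>a'\<in>A. robust_Q X E U A \<pi> P \<delta> l a' * \<pi> l a')) * P x a y))"
  proof -
  interpret rmdp X E U A P \<pi> \<delta>
    by unfold_locales (use assms in auto)
  show ?thesis by (rule main) (use assms in auto)
qed

end
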